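(* Let $\mathcal R_4=\{(0^m1^na,4^l): m,n,l\ge0,\ a\in\{2,3\},\ (a=2\Rightarrow l=m)\wedge(a=3\Rightarrow l=n)\}\subseteq\{0,1,2,3\}^*\times\{4\}^*$. Then $\mathcal R_4$ can be computed with an isolated cutpoint both by a probabilistic finite state transducer and by a quantum finite state transducer, but neither by a probabilistic nor by a quantum finite state transducer can it be computed with probability $\alpha$ for any $\alpha>1/2$.
   Context: A probabilistic finite state transducer (pfst) is a tuple $T=(Q,\Sigma_1,\Sigma_2,V,f,q_0,Q_{\rm acc},Q_{\rm rej})$ with finite state set $Q$, finite input/output alphabets $\Sigma_1,\Sigma_2$, initial state $q_0$, disjoint accepting/rejecting sets $Q_{\rm acc},Q_{\rm rej}\subseteq Q$ (the other states are non-halting). For each $a\in\Sigma_1\cup\{\ddagger,\$\}$ ($\ddagger,\$$ are end markers) there is a stochastic $Q\times Q$ matrix $V_a$ and an output function $f_a:Q\to\Sigma_2^*$; $V_\$$ puts all probability on halting states. On input $v$ the machine reads $\ddagger v\$$; in state $q$ reading $a$ it appends $f_a(q)$ to the output tape and moves to state $p$ with probability $(V_a)_{qp}$; if $p$ is accepting (rejecting) it halts and accepts with the current output (rejects). $T(w|v)$ is the probability of accepting with output $w$ on input $v$. A quantum finite state transducer (qfst) has the same data except that each $V_a$ is a unitary on $\ell^2(Q)$ (and $V_\$$ maps the span of non-halting states into the span of halting states). Its non-halting part is a vector $\psi=\sum_{q,w}\alpha_{qw}|q\rangle\otimes|w\rangle\in\ell^2(Q\times\Sigma_2^* )$, initially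 $|q_0\rangle\otimes|\epsilon\rangle$; reading $a$ maps it to $\psi'=\sum_{q,w}\alpha_{qw}V_a|q\rangle\otimes|wf_a(q)\rangle$ with $V_a|q\rangle=\sum_p(V_a)_{qp}|p\rangle$, after which the squared norm of the component of $\psi'$ on $\mathrm{span}(Q_{\rm acc})\otimes|x\rangle$ is added to the probability of accepting with output $x$, the squared norm of the component on $\mathrm{span}(Q_{\rm rej})\otimes\ell^2(\Sigma_2^* )$ to the rejection probability, and the computation continues with the projection onto non-halting states. $T(w|v)$ is defined analogously. For $\alpha>1/2$, $T$ computes $\mathcal R$ with probability $\alpha$ if for all $v,w$: $(v,w)\in\mathcal R\Rightarrow T(w|v)\ge\alpha$ and $(v,w)\notin\mathcal R\Rightarrow T(w|v)\le1-\alpha$. $T$ computes $\mathcal R$ with isolated cutpoint if there are $0<\alpha<1$ and $\varepsilon>0$ such that for all $v,w$: $(v,w)\in\mathcal R\Rightarrow T(w|v)\ge\alpha+\varepsilon$ and $(v,w)\notin\mathcal R\Rightarrow T(w|v)\le\alpha-\varepsilon$. *)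

theory Defs
  imports Complex_Main
begin

text \<open>Tape symbols: input letters plus the left end marker (double dagger) and the
right end marker (dollar).\<close>
datatype 'a sym = Sym 'a | LEnd | REnd

text \<open>A finite state transducer with states drawn from nat (a finite set of them),
transition matrices with scalars of type 's (real for pfst, complex for qfst),
entry trans a q p being (V_a)_{qp}, and output functions f_a.\<close>
record 's fst =
  states :: "nat set"
  init   :: nat
  acc    :: "nat set"
  rej    :: "nat set"
  trans  :: "nat sym \<Rightarrow> nat \<Rightarrow> nat \<Rightarrow> 's"
  out    :: "nat sym \<Rightarrow> nat \<Rightarrow> nat list"

definition tape_syms :: "nat set \<Rightarrow> nat sym set" where
  "tape_syms \<Sigma>1 = Sym ` \<Sigma>1 \<union> {LEnd, REnd}"

definition nonhalting :: "('s, 'z) fst_scheme \<Rightarrow> nat set" where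
  "nonhalting T = states T - (acc T \<union> rej T)"

definition fst_basic :: "nat set \<Rightarrow> nat set \<Rightarrow> ('s::zero, 'z) fst_scheme \<Rightarrow> bool" where
  "fst_basic \<Sigma>1 \<Sigma>2 T \<longleftrightarrow> finite (states T) \<and> init T \<in> states T \<and>
     acc T \<subseteq> states T \<and> rej T \<subseteq> states T \<and> acc T \<inter> rej T = {} \<and>
     (\<forall>a\<in>tape_syms \<Sigma>1. \<forall>q\<in>states T.
        set (out T a q) \<subseteq> \<Sigma>2 \<and> (\<forall>p. p \<notin> states T \<longrightarrow> trans T a q p = 0))"

definition is_pfst :: "nat set \<Rightarrow> nat set \<Rightarrow> real fst \<Rightarrow> bool" where
  "is_pfst \<Sigma>1 \<Sigma>2 T \<longleftrightarrow> fst_basic \<Sigma>1 \<Sigma>2 T \<and>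
     (\<forall>a\<in>tape_syms \<Sigma>1. \<forall>q\<in>states T.
        (\<forall>p\<in>states T. trans T a q p \<ge> 0) \<and> (\<Sum>p\<in>states T. trans T a q p) = 1) \<and>
     (\<forall>q\<in>states T. \<forall>p\<in>nonhalting T. trans T REnd q p = 0)"

definition is_qfst :: "nat set \<Rightarrow> nat set \<Rightarrow> complex fst \<Rightarrow> bool" where
  "is_qfst \<Sigma>1 \<Sigma>2 T \<longleftrightarrow> fst_basic \<Sigma>1 \<Sigma>2 T \<and>
     (\<forall>a\<in>tape_syms \<Sigma>1. \<forall>q\<in>states T. \<forall>q'\<in>states T.
        (\<Sum>p\<in>states T. trans T a q p * cnj (trans T a q' p)) = (if q = q' then 1 else 0)) \<and>
     (\<forall>q\<in>nonhalting T. \<forall>p\<in>nonhalting T. trans T REnd q p = 0)"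

text \<open>One step on a configuration vector (state, output) \<Rightarrow> scalar: reading a,
configuration (q,w) contributes its weight times (V_a)_{qp} to (p, w @ f_a(q)).\<close>
definition fst_step :: "('s::comm_ring_1, 'z) fst_scheme \<Rightarrow> nat sym \<Rightarrow>
    (nat \<Rightarrow> nat list \<Rightarrow> 's) \<Rightarrow> (nat \<Rightarrow> nat list \<Rightarrow> 's)" where
  "fst_step T a \<mu> p x =
     (\<Sum>q\<in>states T. if length (out T a q) \<le> length x \<and> drop (length x - length (out T a q)) x = out T a q
        then \<mu> q (take (length x - length (out T a q)) x) * trans T a q p else 0)"

definition restrict_nonhalting :: "('s::zero, 'z) fst_scheme \<Rightarrow>
    (nat \<Rightarrow> nat list \<Rightarrow> 's) \<Rightarrow> (nat \<Rightarrow> nat list \<Rightarrow> 's)" where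
  "restrict_nonhalting T \<mu> p x = (if p \<in> nonhalting T then \<mu> p x else 0)"

text \<open>The function wt
turns an entry into a probability contribution (identity for pfst,
squared modulus for qfst).\<close>
fun fst_run :: "('s \<Rightarrow> real) \<Rightarrow> ('s::comm_ring_1, 'z) fst_scheme \<Rightarrow> nat sym list \<Rightarrow>
    (nat \<Rightarrow> nat list \<Rightarrow> 's) \<Rightarrow> nat list \<Rightarrow> real" where
  "fst_run wt T [] \<mu> x = 0"
| "fst_run wt T (a # as) \<mu> x =
     (\<Sum>p\<in>acc T. wt (fst_step T a \<mu> p x)) +
     fst_run wt T as (restrict_nonhalting T (fst_step T a \<mu>)) x"

definition init_conf :: "('s::{zero,one}, 'z) fst_scheme \<Rightarrow> nat \<Rightarrow> nat list \<Rightarrow> 's" where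
  "init_conf T q x = (if q = init T \<and> x = [] then 1 else 0)"

definition pfst_prob :: "real fst \<Rightarrow> nat list \<Rightarrow> nat list \<Rightarrow> real" where
  "pfst_prob T w v = fst_run (\<lambda>r. r) T (LEnd # map Sym v @ [REnd]) (init_conf T) w"

definition qfst_prob :: "complex fst \<Rightarrow> nat list \<Rightarrow> nat list \<Rightarrow> real" where
  "qfst_prob T w v = fst_run (\<lambda>c. (cmod c)\<^sup>2) T (LEnd # map Sym v @ [REnd]) (init_conf T) w"

definition computes_with_prob ::
  "nat set \<Rightarrow> nat set \<Rightarrow> (nat list \<Rightarrow> nat list \<Rightarrow> real) \<Rightarrow> real \<Rightarrow> (nat list \<times> nat list) set \<Rightarrow> bool" where
  "computes_with_prob \<Sigma>1 \<Sigma>2 P \<alpha> R \<longleftrightarrow> \<alpha> > 1/2 \<and>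
     (\<forall>v\<in>lists \<Sigma>1. \<forall>w\<in>lists \<Sigma>2.
        ((v, w) \<in> R \<longrightarrow> P w v \<ge> \<alpha>) \<and> ((v, w) \<notin> R \<longrightarrow> P w v \<le> 1 - \<alpha>))"

definition computes_isolated ::
  "nat set \<Rightarrow> nat set \<Rightarrow> (nat list \<Rightarrow> nat list \<Rightarrow> real) \<Rightarrow> (nat list \<times> nat list) set \<Rightarrow> bool" where
  "computes_isolated \<Sigma>1 \<Sigma>2 P R \<longleftrightarrow> (\<exists>\<alpha> \<epsilon>. 0 < \<alpha> \<and> \<alpha> < 1 \<and> \<epsilon> > 0 \<and>
     (\<forall>v\<in>lists \<Sigma>1. \<forall>w\<in>lists \<Sigma>2.
        ((v, w) \<in> R \<longrightarrow> P w v \<ge> \<alpha> + \<epsilon>) \<and> ((v, w) \<notin> R \<longrightarrow> P w v \<le> \<alpha> - \<epsilon>)))"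

definition R4 :: "(nat list \<times> nat list) set" where
  "R4 = {(replicate m 0 @ replicate n 1 @ [a], replicate l 4) | m n l a.
           a \<in> {2, 3} \<and> (a = 2 \<longrightarrow> l = m) \<and> (a = 3 \<longrightarrow> l = n)}"

end

theory Submission
  imports Defs
begin

definition gq :: "('s::comm_ring_1, 'z) fst_scheme \<Rightarrow> nat sym \<Rightarrow> (nat \<Rightarrow> nat list \<Rightarrow> 's) \<Rightarrow> nat \<Rightarrow> nat list \<Rightarrow> 's" where
  "gq T a \<mu> q x = (if length (out T a q) \<le> length x \<and> drop (length x - length (out T a q)) x = out T a q
        then \<mu> q (take (length x - length (out T a q)) x) else 0)"

lemma fst_step_gq: "fst_step T a \<mu> p x = (\<Sum>q\<in>states T. gq T a \<mu> q x * trans T a q p)"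
  unfolding fst_step_def gq_def by (rule sum.cong) auto

fun fst_conf :: "('s::comm_ring_1, 'z) fst_scheme \<Rightarrow> nat sym list \<Rightarrow>
    (nat \<Rightarrow> nat list \<Rightarrow> 's) \<Rightarrow> (nat \<Rightarrow> nat list \<Rightarrow> 's)" where
  "fst_conf T [] \<mu> = \<mu>"
| "fst_conf T (a # as) \<mu> = fst_conf T as (restrict_nonhalting T (fst_step T a \<mu>))"

lemma run_append: "fst_run wt T (L @ R) \<mu> x = fst_run wt T L \<mu> x + fst_run wt T R (fst_conf T L \<mu>) x"
  by (induction L arbitrary: \<mu>) auto

lemma take_suffix: "length u \<le> length x \<Longrightarrow> drop (length x - length u) x = u \<Longrightarrow>
   x = take (length x - length u) x @ u"
  by (metis append_take_drop_id)

lemma step_local: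
  assumes K: "\<forall>q\<in>states T. length (out T a q) \<le> K"
  and ag: "\<forall>q y. (\<exists>z. x = y @ z) \<and> length x \<le> length y + K \<longrightarrow> \<mu> q y = \<mu>' q y"
  shows "fst_step T a \<mu> p x = fst_step T a \<mu>' p x"
  unfolding fst_step_def
proof (rule sum.cong[OF refl])
  fix q assume q: "q \<in> states T"
  show "(if length (out T a q) \<le> length x \<and> drop (length x - length (out T a q)) x = out T a q
          then \<mu> q (take (length x - length (out T a q)) x) * trans T a q p else 0) =
        (if length (out T a q) \<le> length x \<and> drop (length x - length (out T a q)) x = out T a q
          then \<mu>' q (take (length x - length (out T a q)) x) * trans T a q p else 0)"
  proof (cases "length (out T a q) \<le> length x \<and> drop (length x - length (out T a q)) x = out T a q")
    case True
    let ?y = "take (length x - length (out T a q)) x"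
    have e: "x = ?y @ out T a q" using True take_suffix by blast
    have "length x \<le> length ?y + K" using K q True by auto
    then have "\<mu> q ?y = \<mu>' q ?y" using ag e by blast
    then show ?thesis by simp
  next
    case False
    show ?thesis by (simp only: False if_False)
  qed
qed

lemma run_local:
  assumes "\<forall>a\<in>set L. \<forall>q\<in>states T. length (out T a q) \<le> K"
  and "\<forall>q y. (\<exists>z. x = y @ z) \<and> length x \<le> length y + K * length L \<longrightarrow> \<mu> q y = \<mu>' q y"
  shows "fst_run wt T L \<mu> x = fst_run wt T L \<mu>' x"
  using assms
proof (induction L arbitrary: \<mu> \<mu>')
  case Nil
  then show ?case by simp
next
  case (Cons a L)
  have Ka: "\<forall>q\<in>states T. length (out T a q) \<le> K" using Cons.prems by simp
  have s1: "fst_step T a \<mu> p x = fst_step T a \<mu>' p x" for p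
    by (rule step_local[OF Ka]) (use Cons.prems in auto)
  have s2: "restrict_nonhalting T (fst_step T a \<mu>) p x' = restrict_nonhalting T (fst_step T a \<mu>') p x'"
    if "\<exists>z. x = x' @ z" "length x \<le> length x' + K * length L" for p x'
  proof -
    have "fst_step T a \<mu> p x' = fst_step T a \<mu>' p x'"
    proof (rule step_local[OF Ka], intro allI impI)
      fix q y assume h: "(\<exists>z. x' = y @ z) \<and> length x' \<le> length y + K"
      then obtain z where "x' = y @ z" by blast
      with that(1) obtain z' where "x = y @ z'" by auto
      moreover have "length x \<le> length y + K * length (a # L)" using that(2) h by simp
      ultimately show "\<mu> q y = \<mu>' q y" using Cons.prems(2) by blast
    qed
    then show ?thesis unfolding restrict_nonhalting_def by simp
  qed
  have "fst_run wt T L (restrict_nonhalting T (fst_step T a \<mu>)) x =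
        fst_run wt T L (restrict_nonhalting T (fst_step T a \<mu>')) x"
    by (rule Cons.IH) (use Cons.prems s2 in auto)
  then show ?case using s1 by simp
qed

definition Yn :: "nat set \<Rightarrow> nat \<Rightarrow> nat list set" where
  "Yn S n = {y. set y \<subseteq> S \<and> length y \<le> n}"

lemma finite_Yn: "finite S \<Longrightarrow> finite (Yn S n)"
  unfolding Yn_def by (rule finite_lists_length_le)

definition mass :: "('s \<Rightarrow> real) \<Rightarrow> ('s, 'z) fst_scheme \<Rightarrow> nat list set \<Rightarrow> (nat \<Rightarrow> nat list \<Rightarrow> 's) \<Rightarrow> real" where
  "mass wt T Y \<mu> = (\<Sum>q\<in>states T. \<Sum>y\<in>Y. wt (\<mu> q y))"

definition suppin :: "('s::zero, 'z) fst_scheme \<Rightarrow> nat list set \<Rightarrow> (nat \<Rightarrow> nat list \<Rightarrow> 's) \<Rightarrow> bool" where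
  "suppin T Y \<mu> = (\<forall>q y. \<mu> q y \<noteq> 0 \<longrightarrow> q \<in> states T \<and> y \<in> Y)"

lemma supp_step:
  assumes basic: "fst_basic \<Sigma>1 \<Sigma>2 T" and a: "a \<in> tape_syms \<Sigma>1"
  and K: "\<forall>q\<in>states T. length (out T a q) \<le> K"
  and s: "suppin T (Yn \<Sigma>2 n) \<mu>"
  shows "suppin T (Yn \<Sigma>2 (n + K)) (fst_step T a \<mu>)"
  unfolding suppin_def
proof (intro allI impI)
  fix p x assume "fst_step T a \<mu> p x \<noteq> 0"
  then obtain q where q: "q \<in> states T" and nz: "gq T a \<mu> q x * trans T a q p \<noteq> 0"
    unfolding fst_step_gq by (meson sum.neutral)
  let ?o = "out T a q"
  let ?y = "take (length x - length ?o) x"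
  have c: "length ?o \<le> length x \<and> drop (length x - length ?o) x = ?o" and m: "\<mu> q ?y \<noteq> 0"
    using nz unfolding gq_def by (auto split: if_splits)
  have tr: "trans T a q p \<noteq> 0" using nz by auto
  have p: "p \<in> states T" using basic a q tr unfolding fst_basic_def by blast
  have x: "x = ?y @ ?o" using c take_suffix by blast
  have y: "?y \<in> Yn \<Sigma>2 n" using s m unfolding suppin_def by blast
  have o: "set ?o \<subseteq> \<Sigma>2" using basic a q unfolding fst_basic_def by blast
  have "x \<in> Yn \<Sigma>2 (n + K)" using y o K q x unfolding Yn_def
    by (metis (no_types, lifting) Un_subset_iff add_mono length_append mem_Collect_eq set_append)
  then show "p \<in> states T \<and> x \<in> Yn \<Sigma>2 (n + K)" using p by simp
qed

lemma gq_app: "gq T a \<mu> q (y @ out T a q) = \<mu> q y"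
  unfolding gq_def by simp

lemma mass_step:
  assumes basic: "fst_basic \<Sigma>1 \<Sigma>2 T" and a: "a \<in> tape_syms \<Sigma>1" and fin: "finite \<Sigma>2"
  and K: "\<forall>q\<in>states T. length (out T a q) \<le> K"
  and s: "suppin T (Yn \<Sigma>2 n) \<mu>" and wt0: "wt 0 = 0"
  and SC: "\<forall>x. (\<Sum>p\<in>states T. wt (fst_step T a \<mu> p x)) = (\<Sum>q\<in>states T. wt (gq T a \<mu> q x))"
  shows "mass wt T (Yn \<Sigma>2 (n + K)) (fst_step T a \<mu>) = mass wt T (Yn \<Sigma>2 n) \<mu>"
proof -
  let ?Y = "Yn \<Sigma>2 n" and ?Y' = "Yn \<Sigma>2 (n + K)"
  have fY: "finite ?Y" "finite ?Y'" using fin finite_Yn by auto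
  have "mass wt T ?Y' (fst_step T a \<mu>) = (\<Sum>x\<in>?Y'. \<Sum>p\<in>states T. wt (fst_step T a \<mu> p x))"
    unfolding mass_def by (rule sum.swap)
  also have "\<dots> = (\<Sum>x\<in>?Y'. \<Sum>q\<in>states T. wt (gq T a \<mu> q x))" using SC by simp
  also have "\<dots> = (\<Sum>q\<in>states T. \<Sum>x\<in>?Y'. wt (gq T a \<mu> q x))" by (rule sum.swap)
  also have "\<dots> = (\<Sum>q\<in>states T. \<Sum>y\<in>?Y. wt (\<mu> q y))"
  proof (rule sum.cong[OF refl])
    fix q assume q: "q \<in> states T"
    let ?o = "out T a q"
    let ?im = "(\<lambda>y. y @ ?o) ` ?Y"
    have o: "set ?o \<subseteq> \<Sigma>2" using basic a q unfolding fst_basic_def by blast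
    have sub: "?im \<subseteq> ?Y'" using o K q unfolding Yn_def by fastforce
    have "(\<Sum>x\<in>?Y'. wt (gq T a \<mu> q x)) = (\<Sum>x\<in>?im. wt (gq T a \<mu> q x))"
    proof (rule sum.mono_neutral_right[OF fY(2) sub], rule ballI)
      fix x assume x: "x \<in> ?Y' - ?im"
      show "wt (gq T a \<mu> q x) = 0"
      proof (cases "length ?o \<le> length x \<and> drop (length x - length ?o) x = ?o")
        case True
        let ?y = "take (length x - length ?o) x"
        have e: "x = ?y @ ?o" using True take_suffix by blast
        have "\<mu> q ?y = 0"
        proof (rule ccontr)
          assume "\<mu> q ?y \<noteq> 0"
          then have "?y \<in> ?Y" using s unfolding suppin_def by blast
          then have "x \<in> ?im" using e by blast
          then show False using x by blast
        qed
        then show ?thesis using True wt0 unfolding gq_def by simp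
      next
        case False
        show ?thesis unfolding gq_def by (simp only: False if_False wt0)
      qed
    qed
    also have "\<dots> = (\<Sum>y\<in>?Y. wt (gq T a \<mu> q (y @ ?o)))"
      by (rule sum.reindex_cong[where l="\<lambda>y. y @ ?o"]) (auto simp: inj_on_def)
    also have "\<dots> = (\<Sum>y\<in>?Y. wt (\<mu> q y))" by (simp add: gq_app)
    finally show "(\<Sum>x\<in>?Y'. wt (gq T a \<mu> q x)) = (\<Sum>y\<in>?Y. wt (\<mu> q y))" .
  qed
  also have "\<dots> = mass wt T ?Y \<mu>" unfolding mass_def ..
  finally show ?thesis .
qed

lemma restrict_nonhalting_eq: "restrict_nonhalting T \<mu> = (\<lambda>q y. if q \<in> nonhalting T then \<mu> q y else 0)"
  unfolding restrict_nonhalting_def by (intro ext) simp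

lemma suppin_restr: "suppin T Y \<mu> \<Longrightarrow> suppin T Y (\<lambda>q y. if P q y then \<mu> q y else 0)"
  unfolding suppin_def by auto

context
  fixes T :: "('s::comm_ring_1, 'z) fst_scheme" and \<Sigma>1 \<Sigma>2 :: "nat set" and K :: nat
    and wt :: "'s \<Rightarrow> real" and G :: "(nat \<Rightarrow> nat list \<Rightarrow> 's) \<Rightarrow> bool"
  assumes basic: "fst_basic \<Sigma>1 \<Sigma>2 T" and fin2: "finite \<Sigma>2"
    and Kb: "\<forall>a\<in>tape_syms \<Sigma>1. \<forall>q\<in>states T. length (out T a q) \<le> K"
    and wt0: "wt 0 = 0"
    and Gwt: "\<And>\<mu> q y. G \<mu> \<Longrightarrow> wt (\<mu> q y) \<ge> 0"
    and Gstep: "\<And>a \<mu>. a \<in> tape_syms \<Sigma>1 \<Longrightarrow> G \<mu> \<Longrightarrow> G (fst_step T a \<mu>)"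
    and Grestr: "\<And>\<mu> P. G \<mu> \<Longrightarrow> G (\<lambda>q y. if P q y then \<mu> q y else 0)"
    and SC: "\<And>a \<mu> x. a \<in> tape_syms \<Sigma>1 \<Longrightarrow> G \<mu> \<Longrightarrow>
        (\<Sum>p\<in>states T. wt (fst_step T a \<mu> p x)) = (\<Sum>q\<in>states T. wt (gq T a \<mu> q x))"
begin

lemma finite_states: "finite (states T)" using basic unfolding fst_basic_def by blast

lemma acc_bound:
  "set L \<subseteq> tape_syms \<Sigma>1 \<Longrightarrow> G \<mu> \<Longrightarrow> suppin T (Yn \<Sigma>2 n) \<mu> \<Longrightarrow> finite X \<Longrightarrow>
   (\<Sum>x\<in>X. fst_run wt T L \<mu> x) + mass wt T (Yn \<Sigma>2 (n + K * length L)) (fst_conf T L \<mu>)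
     \<le> mass wt T (Yn \<Sigma>2 n) \<mu>"
proof (induction L arbitrary: \<mu> n)
  case Nil
  then show ?case by simp
next
  case (Cons a L)
  let ?m1 = "fst_step T a \<mu>"
  let ?m2 = "restrict_nonhalting T ?m1"
  let ?Y = "Yn \<Sigma>2 (n + K)"
  have a: "a \<in> tape_syms \<Sigma>1" using Cons.prems by simp
  have G1: "G ?m1" using Gstep a Cons.prems by blast
  have G2: "G ?m2" unfolding restrict_nonhalting_eq by (rule Grestr[OF G1])
  have s1: "suppin T ?Y ?m1" by (rule supp_step[OF basic a]) (use Kb a Cons.prems in auto)
  have s2: "suppin T ?Y ?m2" unfolding restrict_nonhalting_eq by (rule suppin_restr[OF s1])
  have IH: "(\<Sum>x\<in>X. fst_run wt T L ?m2 x) + mass wt T (Yn \<Sigma>2 (n + K + K * length L)) (fst_conf T L ?m2)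
     \<le> mass wt T ?Y ?m2"
    by (rule Cons.IH) (use Cons.prems G2 s2 in auto)
  have ms: "mass wt T ?Y ?m1 = mass wt T (Yn \<Sigma>2 n) \<mu>"
    by (rule mass_step[OF basic a fin2]) (use Kb a Cons.prems wt0 SC[OF a Cons.prems(2)] in auto)
  define S where "S p = (\<Sum>y\<in>?Y. wt (?m1 p y))" for p
  have Snn: "S p \<ge> 0" for p unfolding S_def using Gwt[OF G1] by (simp add: sum_nonneg)
  have fY: "finite ?Y" using fin2 finite_Yn by auto
  have fS: "finite (states T)" by (rule finite_states)
  have accsub: "acc T \<subseteq> states T" and accdis: "acc T \<inter> nonhalting T = {}"
    and nhsub: "nonhalting T \<subseteq> states T"
    using basic unfolding fst_basic_def nonhalting_def by auto
  have m1: "mass wt T ?Y ?m1 = (\<Sum>p\<in>states T. S p)" unfolding mass_def S_def ..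
  have m2: "mass wt T ?Y ?m2 = (\<Sum>p\<in>nonhalting T. S p)"
  proof -
    have "mass wt T ?Y ?m2 = (\<Sum>p\<in>states T. if p \<in> nonhalting T then S p else 0)"
      unfolding mass_def S_def restrict_nonhalting_eq by (rule sum.cong) (auto simp: wt0)
    also have "\<dots> = (\<Sum>p\<in>nonhalting T. S p)"
      using nhsub by (simp add: sum.If_cases fS Int_absorb1)
    finally show ?thesis .
  qed
  have A: "(\<Sum>x\<in>X. \<Sum>p\<in>acc T. wt (?m1 p x)) \<le> (\<Sum>p\<in>acc T. S p)"
  proof -
    have "(\<Sum>x\<in>X. \<Sum>p\<in>acc T. wt (?m1 p x)) = (\<Sum>p\<in>acc T. \<Sum>x\<in>X. wt (?m1 p x))" by (rule sum.swap)
    also have "\<dots> \<le> (\<Sum>p\<in>acc T. S p)"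
    proof (rule sum_mono)
      fix p assume p: "p \<in> acc T"
      have "(\<Sum>x\<in>X. wt (?m1 p x)) = (\<Sum>x\<in>X \<inter> ?Y. wt (?m1 p x))"
        by (rule sum.mono_neutral_right) (use Cons.prems s1 wt0 in \<open>auto simp: suppin_def, metis\<close>)
      also have "\<dots> \<le> S p" unfolding S_def
        by (rule sum_mono2[OF fY]) (use Gwt[OF G1] in auto)
      finally show "(\<Sum>x\<in>X. wt (?m1 p x)) \<le> S p" .
    qed
    finally show ?thesis .
  qed
  have split: "(\<Sum>p\<in>acc T. S p) + (\<Sum>p\<in>nonhalting T. S p) \<le> (\<Sum>p\<in>states T. S p)"
  proof -
    have "(\<Sum>p\<in>acc T. S p) + (\<Sum>p\<in>nonhalting T. S p) = (\<Sum>p\<in>acc T \<union> nonhalting T. S p)"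
      using accdis fS accsub nhsub by (simp add: sum.union_disjoint finite_subset)
    also have "\<dots> \<le> (\<Sum>p\<in>states T. S p)"
      by (rule sum_mono2[OF fS]) (use accsub nhsub Snn in auto)
    finally show ?thesis .
  qed
  have run: "(\<Sum>x\<in>X. fst_run wt T (a # L) \<mu> x) =
     (\<Sum>x\<in>X. \<Sum>p\<in>acc T. wt (?m1 p x)) + (\<Sum>x\<in>X. fst_run wt T L ?m2 x)"
    by (simp add: sum.distrib)
  have e: "n + K * length (a # L) = n + K + K * length L" by simp
  show ?case unfolding run e fst_conf.simps using IH ms m1 m2 A split by linarith
qed

lemma conf_props:
  "set L \<subseteq> tape_syms \<Sigma>1 \<Longrightarrow> G \<mu> \<Longrightarrow> suppin T (Yn \<Sigma>2 n) \<mu> \<Longrightarrow>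
   G (fst_conf T L \<mu>) \<and> suppin T (Yn \<Sigma>2 (n + K * length L)) (fst_conf T L \<mu>)"
proof (induction L arbitrary: \<mu> n)
  case Nil
  then show ?case by simp
next
  case (Cons a L)
  have a: "a \<in> tape_syms \<Sigma>1" using Cons.prems by simp
  have G1: "G (restrict_nonhalting T (fst_step T a \<mu>))"
    unfolding restrict_nonhalting_eq by (rule Grestr[OF Gstep[OF a Cons.prems(2)]])
  have s1: "suppin T (Yn \<Sigma>2 (n + K)) (fst_step T a \<mu>)"
    by (rule supp_step[OF basic a]) (use Kb a Cons.prems in auto)
  have s2: "suppin T (Yn \<Sigma>2 (n + K)) (restrict_nonhalting T (fst_step T a \<mu>))"
    unfolding restrict_nonhalting_eq by (rule suppin_restr[OF s1])
  have e: "n + K * length (a # L) = n + K + K * length L" by simp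
  show ?case unfolding e fst_conf.simps by (rule Cons.IH) (use Cons.prems G1 s2 in auto)
qed

lemma mass_nonneg: "G \<mu> \<Longrightarrow> mass wt T Y \<mu> \<ge> 0"
  unfolding mass_def using Gwt by (simp add: sum_nonneg)

lemma no_prob:
  assumes S1: "\<Sigma>1 = {0,1,2,3}" and S2: "\<Sigma>2 = {4}" and wt1: "wt 1 = 1"
    and Ginit: "G (init_conf T)" and al: "\<alpha> > 1/2"
  shows "\<not> computes_with_prob \<Sigma>1 \<Sigma>2 (\<lambda>w v. fst_run wt T (LEnd # map Sym v @ [REnd]) (init_conf T) w) \<alpha> R4"
proof
  assume C: "computes_with_prob \<Sigma>1 \<Sigma>2 (\<lambda>w v. fst_run wt T (LEnd # map Sym v @ [REnd]) (init_conf T) w) \<alpha> R4"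
  define N where "N = 2 * K + 1"
  define u where "u = replicate N (1::nat)"
  define L where "L = LEnd # map Sym u"
  define M where "M = 0 + K * length L"
  define \<mu>u where "\<mu>u = fst_conf T L (init_conf T)"
  define \<mu>1 where "\<mu>1 = (\<lambda>q y. if y = [] then \<mu>u q y else 0)"
  define \<mu>2 where "\<mu>2 = (\<lambda>q y. if y \<noteq> [] then \<mu>u q y else 0)"
  define x2 where "x2 = replicate N (4::nat)"
  have tsyms: "LEnd \<in> tape_syms \<Sigma>1" "REnd \<in> tape_syms \<Sigma>1" "Sym 1 \<in> tape_syms \<Sigma>1"
    "Sym 2 \<in> tape_syms \<Sigma>1" "Sym 3 \<in> tape_syms \<Sigma>1"
    unfolding tape_syms_def S1 by auto
  have Lsub: "set L \<subseteq> tape_syms \<Sigma>1" unfolding L_def u_def using tsyms by auto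
  have sinit: "suppin T (Yn \<Sigma>2 0) (init_conf T)"
    using basic unfolding suppin_def init_conf_def Yn_def fst_basic_def by auto
  have cp: "G \<mu>u \<and> suppin T (Yn \<Sigma>2 M) \<mu>u"
    unfolding \<mu>u_def M_def by (rule conf_props[OF Lsub Ginit sinit])
  have G1: "G \<mu>1" "G \<mu>2" unfolding \<mu>1_def \<mu>2_def using Grestr[OF conjunct1[OF cp]] by auto
  have s12: "suppin T (Yn \<Sigma>2 M) \<mu>1" "suppin T (Yn \<Sigma>2 M) \<mu>2"
    unfolding \<mu>1_def \<mu>2_def using suppin_restr cp by auto
  have x2ne: "x2 \<noteq> []" unfolding x2_def N_def by simp
  have minit: "mass wt T (Yn \<Sigma>2 0) (init_conf T) = 1"
  proof -
    have Y0: "Yn \<Sigma>2 0 = {[]}" unfolding Yn_def by auto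
    have "mass wt T (Yn \<Sigma>2 0) (init_conf T) = (\<Sum>q\<in>states T. if q = init T then 1 else 0)"
      unfolding mass_def Y0 init_conf_def by (rule sum.cong) (auto simp: wt0 wt1)
    also have "\<dots> = 1" using basic finite_states unfolding fst_basic_def by simp
    finally show ?thesis .
  qed
  have AB: "(\<Sum>x\<in>{[], x2}. fst_run wt T L (init_conf T) x) + mass wt T (Yn \<Sigma>2 M) \<mu>u \<le> 1"
  proof -
    have "(\<Sum>x\<in>{[], x2}. fst_run wt T L (init_conf T) x) + mass wt T (Yn \<Sigma>2 (0 + K * length L)) (fst_conf T L (init_conf T)) \<le> mass wt T (Yn \<Sigma>2 0) (init_conf T)"
      by (rule acc_bound[OF Lsub Ginit sinit]) simp
    then show ?thesis unfolding minit \<mu>u_def M_def .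
  qed
  have msplit: "mass wt T (Yn \<Sigma>2 M) \<mu>1 + mass wt T (Yn \<Sigma>2 M) \<mu>2 = mass wt T (Yn \<Sigma>2 M) \<mu>u"
    unfolding mass_def sum.distrib[symmetric]
    by (rule sum.cong[OF refl], rule sum.cong[OF refl]) (simp add: \<mu>1_def \<mu>2_def wt0)
  have Kab: "\<forall>a\<in>set [Sym b, REnd]. \<forall>q\<in>states T. length (out T a q) \<le> K" if "Sym b \<in> tape_syms \<Sigma>1" for b
    using Kb that tsyms by auto
  have r1: "fst_run wt T [Sym 2, REnd] \<mu>u [] \<le> mass wt T (Yn \<Sigma>2 M) \<mu>1"
  proof -
    have "fst_run wt T [Sym 2, REnd] \<mu>u [] = fst_run wt T [Sym 2, REnd] \<mu>1 []"
      by (rule run_local[OF Kab[OF tsyms(4)]]) (auto simp: \<mu>1_def)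
    also have "\<dots> \<le> mass wt T (Yn \<Sigma>2 M) \<mu>1"
    proof -
      have ab: "(\<Sum>x\<in>{[]}. fst_run wt T [Sym 2, REnd] \<mu>1 x) + mass wt T (Yn \<Sigma>2 (M + K * length [Sym (2::nat), REnd])) (fst_conf T [Sym 2, REnd] \<mu>1) \<le> mass wt T (Yn \<Sigma>2 M) \<mu>1"
        by (rule acc_bound) (use tsyms G1 s12 in auto)
      have nn: "mass wt T (Yn \<Sigma>2 (M + K * length [Sym (2::nat), REnd])) (fst_conf T [Sym 2, REnd] \<mu>1) \<ge> 0"
        by (rule mass_nonneg, rule conjunct1[OF conf_props]) (use tsyms G1 s12 in auto)
      show ?thesis using ab nn by simp
    qed
    finally show ?thesis .
  qed
  have r2: "fst_run wt T [Sym 3, REnd] \<mu>u x2 \<le> mass wt T (Yn \<Sigma>2 M) \<mu>2"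
  proof -
    have "fst_run wt T [Sym 3, REnd] \<mu>u x2 = fst_run wt T [Sym 3, REnd] \<mu>2 x2"
    proof (rule run_local[OF Kab[OF tsyms(5)]], intro allI impI)
      fix q y assume h: "(\<exists>z. x2 = y @ z) \<and> length x2 \<le> length y + K * length [Sym (3::nat), REnd]"
      then have "y \<noteq> []" unfolding x2_def N_def by auto
      then show "\<mu>u q y = \<mu>2 q y" unfolding \<mu>2_def by simp
    qed
    also have "\<dots> \<le> mass wt T (Yn \<Sigma>2 M) \<mu>2"
    proof -
      have ab: "(\<Sum>x\<in>{x2}. fst_run wt T [Sym 3, REnd] \<mu>2 x) + mass wt T (Yn \<Sigma>2 (M + K * length [Sym (3::nat), REnd])) (fst_conf T [Sym 3, REnd] \<mu>2) \<le> mass wt T (Yn \<Sigma>2 M) \<mu>2"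
        by (rule acc_bound) (use tsyms G1 s12 in auto)
      have nn: "mass wt T (Yn \<Sigma>2 (M + K * length [Sym (3::nat), REnd])) (fst_conf T [Sym 3, REnd] \<mu>2) \<ge> 0"
        by (rule mass_nonneg, rule conjunct1[OF conf_props]) (use tsyms G1 s12 in auto)
      show ?thesis using ab nn by simp
    qed
    finally show ?thesis .
  qed
  have in1: "(u @ [2], []) \<in> R4" unfolding R4_def u_def
    by (rule CollectI, rule exI[of _ 0], rule exI[of _ N], rule exI[of _ 0], rule exI[of _ 2]) simp
  have in2: "(u @ [3], x2) \<in> R4" unfolding R4_def u_def x2_def
    by (rule CollectI, rule exI[of _ 0], rule exI[of _ N], rule exI[of _ N], rule exI[of _ 3]) simp
  have l1: "u @ [2] \<in> lists \<Sigma>1" "u @ [3] \<in> lists \<Sigma>1" unfolding u_def S1 by auto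
  have l2: "[] \<in> lists \<Sigma>2" "x2 \<in> lists \<Sigma>2" unfolding x2_def S2 by auto
  have dec: "LEnd # map Sym (u @ [b]) @ [REnd] = L @ [Sym b, REnd]" for b unfolding L_def by simp
  have CC: "\<forall>v\<in>lists \<Sigma>1. \<forall>w\<in>lists \<Sigma>2. (v, w) \<in> R4 \<longrightarrow> fst_run wt T (LEnd # map Sym v @ [REnd]) (init_conf T) w \<ge> \<alpha>"
    using C unfolding computes_with_prob_def by blast
  have "fst_run wt T (LEnd # map Sym (u @ [2]) @ [REnd]) (init_conf T) [] \<ge> \<alpha>"
    using CC in1 l1 l2 by blast
  then have p1: "fst_run wt T L (init_conf T) [] + fst_run wt T [Sym 2, REnd] \<mu>u [] \<ge> \<alpha>"
    by (simp only: dec run_append \<mu>u_def)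
  have "fst_run wt T (LEnd # map Sym (u @ [3]) @ [REnd]) (init_conf T) x2 \<ge> \<alpha>"
    using CC in2 l1 l2 by blast
  then have p2: "fst_run wt T L (init_conf T) x2 + fst_run wt T [Sym 3, REnd] \<mu>u x2 \<ge> \<alpha>"
    by (simp only: dec run_append \<mu>u_def)
  have "(\<Sum>x\<in>{[], x2}. fst_run wt T L (init_conf T) x) =
      fst_run wt T L (init_conf T) [] + fst_run wt T L (init_conf T) x2"
    using x2ne by simp
  then show False using AB msplit r1 r2 p1 p2 al by linarith
qed

end


lemma unitary_norm:
  fixes V :: "nat \<Rightarrow> nat \<Rightarrow> complex"
  assumes fin: "finite Q"
    and U: "\<forall>q\<in>Q. \<forall>q'\<in>Q. (\<Sum>p\<in>Q. V q p * cnj (V q' p)) = (if q = q' then 1 else 0)"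
  shows "(\<Sum>p\<in>Q. (cmod (\<Sum>q\<in>Q. c q * V q p))\<^sup>2) = (\<Sum>q\<in>Q. (cmod (c q))\<^sup>2)"
proof -
  have "complex_of_real (\<Sum>p\<in>Q. (cmod (\<Sum>q\<in>Q. c q * V q p))\<^sup>2)
      = (\<Sum>p\<in>Q. (\<Sum>q\<in>Q. c q * V q p) * cnj (\<Sum>q\<in>Q. c q * V q p))"
    by (simp only: of_real_sum complex_norm_square)
  also have "\<dots> = (\<Sum>p\<in>Q. \<Sum>q\<in>Q. \<Sum>q'\<in>Q. c q * V q p * cnj (c q' * V q' p))"
    by (simp only: cnj_sum sum_product)
  also have "\<dots> = (\<Sum>q\<in>Q. \<Sum>q'\<in>Q. \<Sum>p\<in>Q. c q * V q p * cnj (c q' * V q' p))"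
    by (subst sum.swap, rule sum.cong[OF refl], rule sum.swap)
  also have "\<dots> = (\<Sum>q\<in>Q. \<Sum>q'\<in>Q. c q * cnj (c q') * (\<Sum>p\<in>Q. V q p * cnj (V q' p)))"
    by (rule sum.cong[OF refl], rule sum.cong[OF refl]) (simp add: sum_distrib_left mult_ac)
  also have "\<dots> = (\<Sum>q\<in>Q. \<Sum>q'\<in>Q. c q * cnj (c q') * (if q = q' then 1 else 0))"
    using U by simp
  also have "\<dots> = (\<Sum>q\<in>Q. c q * cnj (c q))"
    by (rule sum.cong[OF refl]) (simp add: fin if_distrib[of "\<lambda>x. _ * x"] sum.delta cong: if_cong)
  also have "\<dots> = complex_of_real (\<Sum>q\<in>Q. (cmod (c q))\<^sup>2)"
    by (simp only: of_real_sum complex_norm_square)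
  finally show ?thesis using of_real_eq_iff by blast
qed

lemma finite_tape_syms: "finite \<Sigma>1 \<Longrightarrow> finite (tape_syms \<Sigma>1)"
  unfolding tape_syms_def by simp

lemma K_exists:
  assumes "fst_basic \<Sigma>1 \<Sigma>2 T" "finite \<Sigma>1"
  shows "\<exists>K. \<forall>a\<in>tape_syms \<Sigma>1. \<forall>q\<in>states T. length (out T a q) \<le> K"
proof -
  have f: "finite (states T)" using assms unfolding fst_basic_def by blast
  let ?K = "\<Sum>a\<in>tape_syms \<Sigma>1. \<Sum>q\<in>states T. length (out T a q)"
  have "length (out T a q) \<le> ?K" if "a \<in> tape_syms \<Sigma>1" "q \<in> states T" for a q
  proof -
    have "length (out T a q) \<le> (\<Sum>q\<in>states T. length (out T a q))"
      using f that by (intro member_le_sum) auto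
    also have "\<dots> \<le> ?K" using that finite_tape_syms[OF assms(2)]
      by (intro member_le_sum) auto
    finally show ?thesis .
  qed
  then show ?thesis by blast
qed

lemma pfst_impossible:
  assumes T: "is_pfst {0,1,2,3} {4} T" and al: "\<alpha> > 1/2"
  shows "\<not> computes_with_prob {0,1,2,3} {4} (pfst_prob T) \<alpha> R4"
proof -
  have basic: "fst_basic {0,1,2,3} {4} T" using T unfolding is_pfst_def by blast
  obtain K where K: "\<forall>a\<in>tape_syms {0,1,2,3}. \<forall>q\<in>states T. length (out T a q) \<le> K"
    using K_exists[OF basic] by auto
  define G where "G = (\<lambda>\<mu>::nat \<Rightarrow> nat list \<Rightarrow> real. \<forall>q y. \<mu> q y \<ge> 0)"
  have trnn: "trans T a q p \<ge> 0" if "a \<in> tape_syms {0,1,2,3}" "q \<in> states T" for a q p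
    using T that unfolding is_pfst_def fst_basic_def by (cases "p \<in> states T") auto
  have Gstep: "G (fst_step T a \<mu>)" if "a \<in> tape_syms {0,1,2,3}" "G \<mu>" for a \<mu>
    using that trnn unfolding G_def fst_step_def by (auto intro!: sum_nonneg)
  have SC: "(\<Sum>p\<in>states T. fst_step T a \<mu> p x) = (\<Sum>q\<in>states T. gq T a \<mu> q x)"
    if a: "a \<in> tape_syms {0,1,2,3}" for a \<mu> x
  proof -
    have "(\<Sum>p\<in>states T. fst_step T a \<mu> p x) = (\<Sum>q\<in>states T. gq T a \<mu> q x * (\<Sum>p\<in>states T. trans T a q p))"
      unfolding fst_step_gq by (subst sum.swap) (simp add: sum_distrib_left)
    also have "\<dots> = (\<Sum>q\<in>states T. gq T a \<mu> q x)"
      using T a unfolding is_pfst_def by simp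
    finally show ?thesis .
  qed
  have "\<not> computes_with_prob {0,1,2,3} {4} (\<lambda>w v. fst_run (\<lambda>r. r) T (LEnd # map Sym v @ [REnd]) (init_conf T) w) \<alpha> R4"
  proof (rule no_prob[where G=G and K=K and wt="\<lambda>r. r", OF basic _ K])
    show "finite {4::nat}" by simp
    show "(0::real) = 0" by simp
    show "0 \<le> \<mu> q y" if "G \<mu>" for \<mu> q y using that unfolding G_def by blast
    show "G (fst_step T a \<mu>)" if "a \<in> tape_syms {0,1,2,3}" "G \<mu>" for a \<mu> using Gstep that by blast
    show "G (\<lambda>q y. if P q y then \<mu> q y else 0)" if "G \<mu>" for \<mu> P using that unfolding G_def by simp
    show "(\<Sum>p\<in>states T. fst_step T a \<mu> p x) = (\<Sum>q\<in>states T. gq T a \<mu> q x)"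
      if "a \<in> tape_syms {0,1,2,3}" for a \<mu> x using SC that by blast
    show "G (init_conf T)" unfolding G_def init_conf_def by simp
  qed (use al in auto)
  then show ?thesis unfolding pfst_prob_def by simp
qed

lemma qfst_impossible:
  assumes T: "is_qfst {0,1,2,3} {4} T" and al: "\<alpha> > 1/2"
  shows "\<not> computes_with_prob {0,1,2,3} {4} (qfst_prob T) \<alpha> R4"
proof -
  have basic: "fst_basic {0,1,2,3} {4} T" using T unfolding is_qfst_def by blast
  have fin: "finite (states T)" using basic unfolding fst_basic_def by blast
  obtain K where K: "\<forall>a\<in>tape_syms {0,1,2,3}. \<forall>q\<in>states T. length (out T a q) \<le> K"
    using K_exists[OF basic] by auto
  have SC: "(\<Sum>p\<in>states T. (cmod (fst_step T a \<mu> p x))\<^sup>2) = (\<Sum>q\<in>states T. (cmod (gq T a \<mu> q x))\<^sup>2)"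
    if a: "a \<in> tape_syms {0,1,2,3}" for a \<mu> x
    unfolding fst_step_gq
    by (rule unitary_norm[OF fin]) (use T a in \<open>simp add: is_qfst_def\<close>)
  have "\<not> computes_with_prob {0,1,2,3} {4} (\<lambda>w v. fst_run (\<lambda>c. (cmod c)\<^sup>2) T (LEnd # map Sym v @ [REnd]) (init_conf T) w) \<alpha> R4"
  proof (rule no_prob[where G="\<lambda>_. True" and K=K and wt="\<lambda>c. (cmod c)\<^sup>2", OF basic _ K])
    show "finite {4::nat}" by simp
    show "(\<Sum>p\<in>states T. (cmod (fst_step T a \<mu> p x))\<^sup>2) = (\<Sum>q\<in>states T. (cmod (gq T a \<mu> q x))\<^sup>2)"
      if "a \<in> tape_syms {0,1,2,3}" for a \<mu> x using SC that by blast
  qed (use al in auto)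
  then show ?thesis unfolding qfst_prob_def by simp
qed


definition tc :: "(nat \<Rightarrow> 's::zero) \<Rightarrow> nat list \<Rightarrow> nat \<Rightarrow> nat list \<Rightarrow> 's" where
  "tc v w p x = (if x = w then v p else 0)"

definition vstep :: "('s::comm_ring_1, 'z) fst_scheme \<Rightarrow> nat sym \<Rightarrow> (nat \<Rightarrow> 's) \<Rightarrow> nat \<Rightarrow> 's" where
  "vstep T a v p = (\<Sum>q\<in>states T. v q * trans T a q p)"

definition rn :: "('s::zero, 'z) fst_scheme \<Rightarrow> (nat \<Rightarrow> 's) \<Rightarrow> nat \<Rightarrow> 's" where
  "rn T v p = (if p \<in> nonhalting T then v p else 0)"

definition accw :: "('s \<Rightarrow> real) \<Rightarrow> ('s, 'z) fst_scheme \<Rightarrow> (nat \<Rightarrow> 's) \<Rightarrow> real" where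
  "accw wt T v = (\<Sum>p\<in>acc T. wt (v p))"

definition sc :: "'s::times \<Rightarrow> (nat \<Rightarrow> 's) \<Rightarrow> nat \<Rightarrow> 's" where
  "sc \<beta> v p = \<beta> * v p"

lemma suffix_iff: "(length u \<le> length x \<and> drop (length x - length u) x = u \<and> take (length x - length u) x = w)
   \<longleftrightarrow> x = w @ u"
proof
  assume h: "length u \<le> length x \<and> drop (length x - length u) x = u \<and> take (length x - length u) x = w"
  then show "x = w @ u" by (metis append_take_drop_id)
qed simp

lemma step_tc:
  assumes "\<forall>q\<in>states T. v q \<noteq> 0 \<longrightarrow> out T a q = u"
  shows "fst_step T a (tc v w) = tc (vstep T a v) (w @ u)"
proof (intro ext)
  fix p x
  have "fst_step T a (tc v w) p x = (\<Sum>q\<in>states T. if x = w @ u then v q * trans T a q p else 0)"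
    unfolding fst_step_def
  proof (rule sum.cong[OF refl])
    fix q assume q: "q \<in> states T"
    show "(if length (out T a q) \<le> length x \<and> drop (length x - length (out T a q)) x = out T a q
          then tc v w q (take (length x - length (out T a q)) x) * trans T a q p else 0) =
          (if x = w @ u then v q * trans T a q p else 0)"
    proof (cases "v q = 0")
      case True then show ?thesis by (simp add: tc_def)
    next
      case False
      then have o: "out T a q = u" using assms q by blast
      show ?thesis unfolding o tc_def using suffix_iff[of u x w] by auto
    qed
  qed
  also have "\<dots> = tc (vstep T a v) (w @ u) p x" unfolding tc_def vstep_def by simp
  finally show "fst_step T a (tc v w) p x = tc (vstep T a v) (w @ u) p x" .
qed

lemma restrict_tc: "restrict_nonhalting T (tc v w) = tc (rn T v) w"
  unfolding restrict_nonhalting_def tc_def rn_def by (intro ext) simp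

lemma run_tc_cons:
  assumes wt0: "wt 0 = 0" and "\<forall>q\<in>states T. v q \<noteq> 0 \<longrightarrow> out T a q = u"
  shows "fst_run wt T (a # as) (tc v w) x =
     (if x = w @ u then accw wt T (vstep T a v) else 0) + fst_run wt T as (tc (rn T (vstep T a v)) (w @ u)) x"
  using wt0 unfolding fst_run.simps step_tc[OF assms(2)] restrict_tc accw_def by (simp add: tc_def)

lemma run_zero: "wt 0 = 0 \<Longrightarrow> fst_run wt (T::('s::comm_ring_1,'z) fst_scheme) as (\<lambda>_ _. (0::'s)) x = 0"
proof (induction as)
  case Nil then show ?case by simp
next
  case (Cons a as)
  have "fst_step T a (\<lambda>_ _. 0) = (\<lambda>_ _. (0::'s))" unfolding fst_step_def by (intro ext sum.neutral ballI) simp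
  moreover have "restrict_nonhalting T (\<lambda>_ _. 0) = (\<lambda>_ _. (0::'s))" unfolding restrict_nonhalting_def by (intro ext) simp
  ultimately show ?case using Cons by simp
qed

lemma tc_zero: "tc (\<lambda>_. 0) w = (\<lambda>_ _. 0)" unfolding tc_def by (intro ext) simp

lemma vstep_sc: "vstep T a (sc \<beta> v) = sc \<beta> (vstep T a v)"
  unfolding vstep_def sc_def by (intro ext) (simp add: sum_distrib_left mult.assoc)
lemma rn_sc: "rn T (sc \<beta> v) = sc \<beta> (rn T (v::nat \<Rightarrow> 's::comm_ring_1))"
  unfolding rn_def sc_def by (intro ext) simp
lemma sc_sc: "sc \<beta> (sc \<gamma> v) = sc (\<beta> * \<gamma>) (v::nat \<Rightarrow> 's::comm_ring_1)"
  unfolding sc_def by (intro ext) (simp add: mult.assoc)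
lemma sc_zero: "sc \<beta> (\<lambda>_. 0) = (\<lambda>_. (0::'s::comm_ring_1))"
  unfolding sc_def by (intro ext) simp
lemma sc_one: "sc 1 v = (v::nat \<Rightarrow> 's::comm_ring_1)"
  unfolding sc_def by (intro ext) simp
lemma accw_sc: "(\<And>a b. wt (a * b) = wt a * wt b) \<Longrightarrow> accw wt T (sc \<beta> v) = wt \<beta> * accw wt T v"
  unfolding accw_def sc_def by (simp add: sum_distrib_left)

definition closed_br :: "('s::zero, 'z) fst_scheme \<Rightarrow> nat sym \<Rightarrow> nat set \<Rightarrow> nat set \<Rightarrow> bool" where
  "closed_br T a N A \<longleftrightarrow> (\<forall>q\<in>N. \<forall>p. trans T a q p \<noteq> 0 \<longrightarrow> (p \<in> nonhalting T \<longrightarrow> p \<in> N) \<and> (p \<in> acc T \<longrightarrow> p \<in> A))"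

lemma step_outside:
  assumes "closed_br T a N A" "\<forall>p x. p \<notin> N \<longrightarrow> \<mu> p x = 0" "fst_step T a \<mu> p x \<noteq> 0"
  shows "(p \<in> nonhalting T \<longrightarrow> p \<in> N) \<and> (p \<in> acc T \<longrightarrow> p \<in> A)"
proof -
  obtain q where q: "q \<in> states T" and nz: "gq T a \<mu> q x * trans T a q p \<noteq> 0"
    using assms(3) unfolding fst_step_gq by (meson sum.neutral)
  have "q \<in> N" using nz assms(2) unfolding gq_def by (auto split: if_splits)
  moreover have "trans T a q p \<noteq> 0" using nz by auto
  ultimately show ?thesis using assms(1) unfolding closed_br_def by blast
qed

lemma step_add: "fst_step T a (\<lambda>p x. \<mu>1 p x + \<mu>2 p x) = (\<lambda>p x. fst_step T a \<mu>1 p x + fst_step T a \<mu>2 p x)"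
  unfolding fst_step_def by (intro ext) (simp add: sum.distrib[symmetric] distrib_right if_distrib cong: if_cong)

lemma run_split:
  assumes wt0: "wt 0 = 0" and NAB: "NA \<inter> NB = {}" and AAB: "AA \<inter> AB = {}"
  shows "(\<forall>a\<in>set as. closed_br T a NA AA \<and> closed_br T a NB AB) \<Longrightarrow>
    (\<forall>p x. p \<notin> NA \<longrightarrow> \<mu>1 p x = 0) \<Longrightarrow> (\<forall>p x. p \<notin> NB \<longrightarrow> \<mu>2 p x = 0) \<Longrightarrow>
    fst_run wt T as (\<lambda>p x. \<mu>1 p x + \<mu>2 p x) x = fst_run wt T as \<mu>1 x + fst_run wt T as \<mu>2 x"
proof (induction as arbitrary: \<mu>1 \<mu>2)
  case Nil then show ?case by simp
next
  case (Cons a as)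
  let ?s1 = "fst_step T a \<mu>1" and ?s2 = "fst_step T a \<mu>2"
  have c1: "closed_br T a NA AA" and c2: "closed_br T a NB AB" using Cons.prems by auto
  have accs: "(\<Sum>p\<in>acc T. wt (?s1 p x + ?s2 p x)) = (\<Sum>p\<in>acc T. wt (?s1 p x)) + (\<Sum>p\<in>acc T. wt (?s2 p x))"
    unfolding sum.distrib[symmetric]
  proof (rule sum.cong[OF refl])
    fix p assume p: "p \<in> acc T"
    have "?s1 p x = 0 \<or> ?s2 p x = 0"
      using step_outside[OF c1 Cons.prems(2)] step_outside[OF c2 Cons.prems(3)] p AAB by blast
    then show "wt (?s1 p x + ?s2 p x) = wt (?s1 p x) + wt (?s2 p x)" using wt0 by auto
  qed
  have r: "restrict_nonhalting T (\<lambda>p x. ?s1 p x + ?s2 p x) =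
       (\<lambda>p x. restrict_nonhalting T ?s1 p x + restrict_nonhalting T ?s2 p x)"
    unfolding restrict_nonhalting_def by (intro ext) simp
  have IH: "fst_run wt T as (\<lambda>p x. restrict_nonhalting T ?s1 p x + restrict_nonhalting T ?s2 p x) x =
      fst_run wt T as (restrict_nonhalting T ?s1) x + fst_run wt T as (restrict_nonhalting T ?s2) x"
  proof (rule Cons.IH)
    show "\<forall>a\<in>set as. closed_br T a NA AA \<and> closed_br T a NB AB" using Cons.prems by simp
    show "\<forall>p x. p \<notin> NA \<longrightarrow> restrict_nonhalting T ?s1 p x = 0"
      using step_outside[OF c1 Cons.prems(2)] unfolding restrict_nonhalting_def by auto
    show "\<forall>p x. p \<notin> NB \<longrightarrow> restrict_nonhalting T ?s2 p x = 0"
      using step_outside[OF c2 Cons.prems(3)] unfolding restrict_nonhalting_def by auto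
  qed
  show ?case unfolding fst_run.simps step_add r IH accs by simp
qed


definition Rv :: "('s \<Rightarrow> real) \<Rightarrow> ('s::comm_ring_1, 'z) fst_scheme \<Rightarrow> 's \<Rightarrow> (nat \<Rightarrow> 's) \<Rightarrow> nat list \<Rightarrow> nat list \<Rightarrow> nat list \<Rightarrow> real" where
  "Rv wt T \<beta> E w v x = fst_run wt T (map Sym v @ [REnd]) (tc (sc \<beta> E) w) x"

locale branch =
  fixes T :: "('s::comm_ring_1, 'z) fst_scheme" and wt :: "'s \<Rightarrow> real"
    and S :: "nat set" and ou :: "nat sym \<Rightarrow> nat list"
    and e0 e1 f0 f1 :: "nat \<Rightarrow> 's" and l l' :: nat and pp qq :: 's and Ks :: "'s set"
  assumes wt0: "wt 0 = 0" and wtm: "\<And>a b. wt (a * b) = wt a * wt b"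
    and Ks1: "\<And>\<beta>. \<beta> \<in> Ks \<Longrightarrow> wt \<beta> \<ge> 0"
    and Ks2: "\<And>\<beta>. \<beta> \<in> Ks \<Longrightarrow> \<beta> * pp \<in> Ks"
    and Ks3: "\<And>\<beta>. \<beta> \<in> Ks \<Longrightarrow> \<beta> * qq \<in> Ks"
    and ppb: "0 \<le> wt pp" "wt pp \<le> 1" and qqb: "0 \<le> wt qq" "wt qq \<le> 1"
    and outS: "\<And>a q. q \<in> states T \<Longrightarrow> q \<in> S \<Longrightarrow> out T a q = ou a"
    and ou: "ou (Sym l) = []" "ou REnd = []"
    and supp: "\<And>p. p \<notin> S \<Longrightarrow> e0 p = 0" "\<And>p. p \<notin> S \<Longrightarrow> e1 p = 0"
       "\<And>p. p \<notin> S \<Longrightarrow> f0 p = 0" "\<And>p. p \<notin> S \<Longrightarrow> f1 p = 0"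
    and ll: "l \<noteq> 0" "l \<noteq> 1" "l' \<noteq> 0" "l' \<noteq> 1" "l \<noteq> l'"
    and d00: "rn T (vstep T (Sym 0) e0) = e0" and d01: "rn T (vstep T (Sym 0) e1) = sc pp e0"
    and d10: "rn T (vstep T (Sym 1) e0) = sc qq e1" and d11: "rn T (vstep T (Sym 1) e1) = e1"
    and dl0: "rn T (vstep T (Sym l) e0) = f0" and dl1: "rn T (vstep T (Sym l) e1) = f1"
    and dz0: "\<And>a. a \<in> {Sym l', REnd} \<Longrightarrow> rn T (vstep T a e0) = (\<lambda>_. 0)"
    and dz1: "\<And>a. a \<in> {Sym l', REnd} \<Longrightarrow> rn T (vstep T a e1) = (\<lambda>_. 0)"
    and dzf0: "\<And>b. b \<in> {0, 1, l, l'} \<Longrightarrow> rn T (vstep T (Sym b) f0) = (\<lambda>_. 0)"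
    and dzf1: "\<And>b. b \<in> {0, 1, l, l'} \<Longrightarrow> rn T (vstep T (Sym b) f1) = (\<lambda>_. 0)"
    and ae0: "\<And>a. a \<in> {Sym 0, Sym 1, Sym l, Sym l', REnd} \<Longrightarrow> accw wt T (vstep T a e0) = 0"
    and ae1: "\<And>a. a \<in> {Sym 0, Sym 1, Sym l, Sym l', REnd} \<Longrightarrow> accw wt T (vstep T a e1) = 0"
    and af0: "\<And>b. b \<in> {0, 1, l, l'} \<Longrightarrow> accw wt T (vstep T (Sym b) f0) = 0"
    and af1: "\<And>b. b \<in> {0, 1, l, l'} \<Longrightarrow> accw wt T (vstep T (Sym b) f1) = 0"
    and afR0: "accw wt T (vstep T REnd f0) = 1" and afR1: "accw wt T (vstep T REnd f1) = 1"
begin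

lemma run_cons_E:
  assumes E: "E \<in> {e0, e1, f0, f1}"
  shows "fst_run wt T (a # as) (tc (sc \<beta> E) w) x =
    (if x = w @ ou a then wt \<beta> * accw wt T (vstep T a E) else 0) +
    fst_run wt T as (tc (sc \<beta> (rn T (vstep T a E))) (w @ ou a)) x"
proof -
  have "\<forall>q\<in>states T. sc \<beta> E q \<noteq> 0 \<longrightarrow> out T a q = ou a"
  proof (intro ballI impI)
    fix q assume q: "q \<in> states T" and nz: "sc \<beta> E q \<noteq> 0"
    then have "E q \<noteq> 0" unfolding sc_def by auto
    then have "q \<in> S" using E supp by blast
    then show "out T a q = ou a" using outS q by blast
  qed
  note h = run_tc_cons[where wt=wt and T=T, OF wt0 this]
  show ?thesis unfolding h vstep_sc rn_sc accw_sc[of wt, OF wtm] by simp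
qed

lemma Rv_cons:
  assumes "E \<in> {e0, e1, f0, f1}"
  shows "Rv wt T \<beta> E w (b # v) x =
    (if x = w @ ou (Sym b) then wt \<beta> * accw wt T (vstep T (Sym b) E) else 0) +
    Rv wt T 1 (sc \<beta> (rn T (vstep T (Sym b) E))) (w @ ou (Sym b)) v x"
  unfolding Rv_def using run_cons_E[OF assms] by (simp add: sc_one)

lemma Rv_nil:
  "E \<in> {e0, e1, f0, f1} \<Longrightarrow> Rv wt T \<beta> E w [] x =
    (if x = w then wt \<beta> * accw wt T (vstep T REnd E) else 0)"
  unfolding Rv_def using run_cons_E[of E REnd "[]" \<beta> w x] ou by simp

lemma Rv_zero: "Rv wt T 1 (sc \<beta> (\<lambda>_. 0)) w v x = 0"
  unfolding Rv_def sc_zero sc_one tc_zero by (rule run_zero[where wt=wt, OF wt0])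

lemma Rv_sc: "Rv wt T 1 (sc \<beta> (sc \<gamma> E)) w v x = Rv wt T (\<beta> * \<gamma>) E w v x"
  unfolding Rv_def sc_sc sc_one by simp

lemma Rv_1: "Rv wt T 1 (sc \<beta> E) w v x = Rv wt T \<beta> E w v x"
  unfolding Rv_def sc_one ..

lemma sym_cases: "b \<in> {0, 1, l, l'} \<Longrightarrow> (b = 0 \<Longrightarrow> P) \<Longrightarrow> (b = 1 \<Longrightarrow> P) \<Longrightarrow> (b = l \<Longrightarrow> P) \<Longrightarrow> (b = l' \<Longrightarrow> P) \<Longrightarrow> P"
  by auto

lemma runF:
  assumes E: "E \<in> {f0, f1}" and v: "v \<in> lists {0, 1, l, l'}"
  shows "Rv wt T \<beta> E w v x = (if v = [] \<and> x = w then wt \<beta> else 0)"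
proof (cases v)
  case Nil
  then show ?thesis using E Rv_nil[of E \<beta> w x] afR0 afR1 by auto
next
  case (Cons b v')
  have b: "b \<in> {0, 1, l, l'}" using v Cons by auto
  have "accw wt T (vstep T (Sym b) E) = 0" using E af0[OF b] af1[OF b] by auto
  moreover have "rn T (vstep T (Sym b) E) = (\<lambda>_. 0)" using E dzf0[OF b] dzf1[OF b] by auto
  ultimately show ?thesis using Cons E Rv_cons[of E \<beta> w b v' x] Rv_zero by auto
qed

lemma runU:
  "v \<in> lists {0, 1, l, l'} \<Longrightarrow> \<beta> \<in> Ks \<Longrightarrow> E \<in> {e0, e1} \<Longrightarrow>
    0 \<le> Rv wt T \<beta> E w v x \<and> Rv wt T \<beta> E w v x \<le> wt \<beta>"
proof (induction v arbitrary: \<beta> E w)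
  case Nil
  have "accw wt T (vstep T REnd E) = 0" using Nil ae0 ae1 by auto
  then show ?case using Nil Rv_nil[of E \<beta> w x] Ks1 by auto
next
  case (Cons b v)
  have b: "b \<in> {0, 1, l, l'}" and v: "v \<in> lists {0, 1, l, l'}" using Cons by auto
  have E: "E \<in> {e0, e1, f0, f1}" using Cons by auto
  have a0: "accw wt T (vstep T (Sym b) E) = 0" using Cons.prems(3) ae0 ae1 b by auto
  have wb: "0 \<le> wt \<beta>" using Ks1 Cons by blast
  have H: "0 \<le> Rv wt T 1 (sc \<beta> (rn T (vstep T (Sym b) E))) (w @ ou (Sym b)) v x \<and>
        Rv wt T 1 (sc \<beta> (rn T (vstep T (Sym b) E))) (w @ ou (Sym b)) v x \<le> wt \<beta>"
  proof (rule sym_cases[OF b])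
    assume "b = 0"
    show ?thesis
    proof (cases "E = e0")
      case True
      then show ?thesis using Cons.IH[OF v Cons.prems(2), of e0] \<open>b = 0\<close> d00 Rv_1 by simp
    next
      case False
      then have "E = e1" using Cons by auto
      have "wt (\<beta> * pp) \<le> wt \<beta>" using wtm ppb wb by (simp add: mult_left_le)
      then show ?thesis using Cons.IH[OF v Ks2[OF Cons.prems(2)], of e0] \<open>b = 0\<close> \<open>E = e1\<close> d01 Rv_sc
        by (simp add: wtm) (meson order_trans)
    qed
  next
    assume "b = 1"
    show ?thesis
    proof (cases "E = e1")
      case True
      then show ?thesis using Cons.IH[OF v Cons.prems(2), of e1] \<open>b = 1\<close> d11 Rv_1 by simp
    next
      case False
      then have "E = e0" using Cons by auto
      have "wt (\<beta> * qq) \<le> wt \<beta>" using wtm qqb wb by (simp add: mult_left_le)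
      then show ?thesis using Cons.IH[OF v Ks3[OF Cons.prems(2)], of e1] \<open>b = 1\<close> \<open>E = e0\<close> d10 Rv_sc
        by (simp add: wtm) (meson order_trans)
    qed
  next
    assume "b = l"
    then have "rn T (vstep T (Sym b) E) \<in> {f0, f1}" using Cons.prems(3) dl0 dl1 by auto
    then show ?thesis using runF[OF _ v] Rv_1 wb by auto
  next
    assume "b = l'"
    then have "rn T (vstep T (Sym b) E) = (\<lambda>_. 0)" using Cons.prems(3) dz0 dz1 by auto
    then show ?thesis using Rv_zero wb by simp
  qed
  have eq: "Rv wt T \<beta> E w (b # v) x = Rv wt T 1 (sc \<beta> (rn T (vstep T (Sym b) E))) (w @ ou (Sym b)) v x"
    using Rv_cons[OF E, of \<beta> w b v x] a0 by simp
  show ?case unfolding eq by (rule H)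
qed


lemma Rv_step0:
  assumes E: "E \<in> {e0, e1}" and b: "b \<in> {0, 1, l, l'}"
  shows "Rv wt T \<beta> E w (b # v) x = Rv wt T 1 (sc \<beta> (rn T (vstep T (Sym b) E))) (w @ ou (Sym b)) v x"
proof -
  have E': "E \<in> {e0, e1, f0, f1}" using E by auto
  have a0: "accw wt T (vstep T (Sym b) E) = 0" using E ae0 ae1 b by auto
  show ?thesis using Rv_cons[OF E', of \<beta> w b v x] a0 by simp
qed

lemma lists_l: "l \<in> {0, 1, l, l'}" "(0::nat) \<in> {0, 1, l, l'}" "(1::nat) \<in> {0, 1, l, l'}" by auto

lemma runE1: "x = w @ concat (replicate n (ou (Sym 1))) \<Longrightarrow>
   Rv wt T \<beta> e1 w (replicate n 1 @ [l]) x = wt \<beta>"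
proof (induction n arbitrary: w)
  case 0
  have "Rv wt T \<beta> e1 w (replicate 0 1 @ [l]) x = Rv wt T \<beta> f1 w [] x"
    using Rv_step0[of e1 l \<beta> w "[]" x] dl1 ou Rv_1 by simp
  also have "\<dots> = wt \<beta>" using runF[of f1 "[]" \<beta> w x] 0 by simp
  finally show ?case .
next
  case (Suc n)
  have "Rv wt T \<beta> e1 w (replicate (Suc n) 1 @ [l]) x = Rv wt T \<beta> e1 (w @ ou (Sym 1)) (replicate n 1 @ [l]) x"
    using Rv_step0[of e1 1 \<beta> w "replicate n 1 @ [l]" x] d11 Rv_1 by simp
  also have "\<dots> = wt \<beta>" by (rule Suc.IH) (use Suc.prems in simp)
  finally show ?case .
qed

lemma runE0: "\<beta> \<in> Ks \<Longrightarrow> x = w @ concat (replicate m (ou (Sym 0))) @ concat (replicate n (ou (Sym 1))) \<Longrightarrow>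
   Rv wt T \<beta> e0 w (replicate m 0 @ replicate n 1 @ [l]) x \<ge> wt \<beta> * wt qq"
proof (induction m arbitrary: w)
  case 0
  show ?case
  proof (cases n)
    case 0
    have "Rv wt T \<beta> e0 w [l] x = Rv wt T \<beta> f0 w [] x"
      using Rv_step0[of e0 l \<beta> w "[]" x] dl0 ou Rv_1 by simp
    also have "\<dots> = wt \<beta>" using runF[of f0 "[]" \<beta> w x] "0.prems" \<open>n = 0\<close> by simp
    finally show ?thesis using \<open>n = 0\<close> Ks1[OF "0.prems"(1)] qqb by (simp add: mult_left_le)
  next
    case (Suc k)
    have "Rv wt T \<beta> e0 w (replicate 0 0 @ replicate n 1 @ [l]) x =
        Rv wt T (\<beta> * qq) e1 (w @ ou (Sym 1)) (replicate k 1 @ [l]) x"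
      using Rv_step0[of e0 1 \<beta> w "replicate k 1 @ [l]" x] d10 Rv_sc Suc by simp
    also have "\<dots> = wt (\<beta> * qq)" by (rule runE1) (use "0.prems" Suc in simp)
    finally show ?thesis by (simp add: wtm)
  qed
next
  case (Suc m)
  have "Rv wt T \<beta> e0 w (replicate (Suc m) 0 @ replicate n 1 @ [l]) x =
      Rv wt T \<beta> e0 (w @ ou (Sym 0)) (replicate m 0 @ replicate n 1 @ [l]) x"
    using Rv_step0[of e0 0 \<beta> w "replicate m 0 @ replicate n 1 @ [l]" x] d00 Rv_1 by simp
  also have "\<dots> \<ge> wt \<beta> * wt qq" by (rule Suc.IH) (use Suc.prems in simp_all)
  finally show ?case .
qed

lemma runM1: "v \<in> lists {0, 1, l, l'} \<Longrightarrow> \<beta> \<in> Ks \<Longrightarrow>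
   \<not> (\<exists>n. v = replicate n 1 @ [l] \<and> x = w @ concat (replicate n (ou (Sym 1)))) \<Longrightarrow>
   Rv wt T \<beta> e1 w v x \<le> wt \<beta> * wt pp"
proof (induction v arbitrary: w)
  case Nil
  have "accw wt T (vstep T REnd e1) = 0" using ae1 by auto
  then show ?case using Rv_nil[of e1 \<beta> w x] Ks1[OF Nil.prems(2)] ppb by simp
next
  case (Cons b v)
  have b: "b \<in> {0, 1, l, l'}" and v: "v \<in> lists {0, 1, l, l'}" using Cons by auto
  have wb: "0 \<le> wt \<beta>" using Ks1 Cons by blast
  have st: "Rv wt T \<beta> e1 w (b # v) x = Rv wt T 1 (sc \<beta> (rn T (vstep T (Sym b) e1))) (w @ ou (Sym b)) v x"
    by (rule Rv_step0) (use b in auto)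
  show ?case
  proof (rule sym_cases[OF b])
    assume "b = 0"
    then have "Rv wt T \<beta> e1 w (b # v) x = Rv wt T (\<beta> * pp) e0 (w @ ou (Sym 0)) v x"
      using st d01 Rv_sc by simp
    also have "\<dots> \<le> wt (\<beta> * pp)" using runU[OF v Ks2[OF Cons.prems(2)], of e0] by simp
    finally show ?thesis by (simp add: wtm)
  next
    assume "b = 1"
    then have "Rv wt T \<beta> e1 w (b # v) x = Rv wt T \<beta> e1 (w @ ou (Sym 1)) v x"
      using st d11 Rv_1 by simp
    also have "\<dots> \<le> wt \<beta> * wt pp"
    proof (rule Cons.IH[OF v Cons.prems(2)], rule notI)
      assume "\<exists>n. v = replicate n 1 @ [l] \<and> x = (w @ ou (Sym 1)) @ concat (replicate n (ou (Sym 1)))"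
      then obtain n where "v = replicate n 1 @ [l]" "x = (w @ ou (Sym 1)) @ concat (replicate n (ou (Sym 1)))" by blast
      then have "b # v = replicate (Suc n) 1 @ [l] \<and> x = w @ concat (replicate (Suc n) (ou (Sym 1)))"
        using \<open>b = 1\<close> by simp
      then show False using Cons.prems(3) by blast
    qed
    finally show ?thesis .
  next
    assume "b = l"
    then have "Rv wt T \<beta> e1 w (b # v) x = Rv wt T \<beta> f1 w v x"
      using st dl1 Rv_1 ou by simp
    also have "\<dots> = 0"
    proof -
      have "\<not> (v = [] \<and> x = w)"
      proof
        assume "v = [] \<and> x = w"
        then have "b # v = replicate 0 1 @ [l] \<and> x = w @ concat (replicate 0 (ou (Sym 1)))" using \<open>b = l\<close> by simp
        then show False using Cons.prems(3) by blast
      qed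
      moreover have "Rv wt T \<beta> f1 w v x = (if v = [] \<and> x = w then wt \<beta> else 0)" by (rule runF) (use v in auto)
      ultimately show ?thesis by (simp only: if_not_P if_False)
    qed
    finally show ?thesis using wb ppb by simp
  next
    assume "b = l'"
    then have "Rv wt T \<beta> e1 w (b # v) x = 0" using st dz1[of "Sym l'"] Rv_zero by simp
    then show ?thesis using wb ppb by simp
  qed
qed

lemma runM0: "v \<in> lists {0, 1, l, l'} \<Longrightarrow> \<beta> \<in> Ks \<Longrightarrow>
   \<not> (\<exists>m n. v = replicate m 0 @ replicate n 1 @ [l] \<and>
        x = w @ concat (replicate m (ou (Sym 0))) @ concat (replicate n (ou (Sym 1)))) \<Longrightarrow>
   Rv wt T \<beta> e0 w v x \<le> wt \<beta> * wt qq * wt pp"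
proof (induction v arbitrary: w)
  case Nil
  have "accw wt T (vstep T REnd e0) = 0" using ae0 by auto
  then show ?case using Rv_nil[of e0 \<beta> w x] Ks1[OF Nil.prems(2)] ppb qqb by simp
next
  case (Cons b v)
  have b: "b \<in> {0, 1, l, l'}" and v: "v \<in> lists {0, 1, l, l'}" using Cons by auto
  have wb: "0 \<le> wt \<beta>" using Ks1 Cons by blast
  have nn: "0 \<le> wt \<beta> * wt qq * wt pp" using wb ppb qqb by simp
  have st: "Rv wt T \<beta> e0 w (b # v) x = Rv wt T 1 (sc \<beta> (rn T (vstep T (Sym b) e0))) (w @ ou (Sym b)) v x"
    by (rule Rv_step0) (use b in auto)
  show ?case
  proof (rule sym_cases[OF b])
    assume "b = 0"
    then have "Rv wt T \<beta> e0 w (b # v) x = Rv wt T \<beta> e0 (w @ ou (Sym 0)) v x"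
      using st d00 Rv_1 by simp
    also have "\<dots> \<le> wt \<beta> * wt qq * wt pp"
    proof (rule Cons.IH[OF v Cons.prems(2)], rule notI)
      assume "\<exists>m n. v = replicate m 0 @ replicate n 1 @ [l] \<and>
        x = (w @ ou (Sym 0)) @ concat (replicate m (ou (Sym 0))) @ concat (replicate n (ou (Sym 1)))"
      then obtain m n where "v = replicate m 0 @ replicate n 1 @ [l]"
        "x = (w @ ou (Sym 0)) @ concat (replicate m (ou (Sym 0))) @ concat (replicate n (ou (Sym 1)))" by blast
      then have "b # v = replicate (Suc m) 0 @ replicate n 1 @ [l] \<and>
        x = w @ concat (replicate (Suc m) (ou (Sym 0))) @ concat (replicate n (ou (Sym 1)))"
        using \<open>b = 0\<close> by simp
      then show False using Cons.prems(3) by blast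
    qed
    finally show ?thesis .
  next
    assume "b = 1"
    then have "Rv wt T \<beta> e0 w (b # v) x = Rv wt T (\<beta> * qq) e1 (w @ ou (Sym 1)) v x"
      using st d10 Rv_sc by simp
    also have "\<dots> \<le> wt (\<beta> * qq) * wt pp"
    proof (rule runM1[OF v Ks3[OF Cons.prems(2)]], rule notI)
      assume "\<exists>n. v = replicate n 1 @ [l] \<and> x = (w @ ou (Sym 1)) @ concat (replicate n (ou (Sym 1)))"
      then obtain n where "v = replicate n 1 @ [l]" "x = (w @ ou (Sym 1)) @ concat (replicate n (ou (Sym 1)))" by blast
      then have "b # v = replicate 0 0 @ replicate (Suc n) 1 @ [l] \<and>
          x = w @ concat (replicate 0 (ou (Sym 0))) @ concat (replicate (Suc n) (ou (Sym 1)))"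
        using \<open>b = 1\<close> by simp
      then show False using Cons.prems(3) by blast
    qed
    finally show ?thesis by (simp add: wtm)
  next
    assume "b = l"
    then have "Rv wt T \<beta> e0 w (b # v) x = Rv wt T \<beta> f0 w v x"
      using st dl0 Rv_1 ou by simp
    also have "\<dots> = 0"
    proof -
      have "\<not> (v = [] \<and> x = w)"
      proof
        assume "v = [] \<and> x = w"
        then have "b # v = replicate 0 0 @ replicate 0 1 @ [l] \<and>
           x = w @ concat (replicate 0 (ou (Sym 0))) @ concat (replicate 0 (ou (Sym 1)))" using \<open>b = l\<close> by simp
        then show False using Cons.prems(3) by blast
      qed
      moreover have "Rv wt T \<beta> f0 w v x = (if v = [] \<and> x = w then wt \<beta> else 0)" by (rule runF) (use v in auto)
      ultimately show ?thesis by (simp only: if_not_P if_False)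
    qed
    finally show ?thesis using nn by simp
  next
    assume "b = l'"
    then have "Rv wt T \<beta> e0 w (b # v) x = 0" using st dz0[of "Sym l'"] Rv_zero by simp
    then show ?thesis using nn by simp
  qed
qed

end


lemma concat_rep4: "concat (replicate m [4::nat]) = replicate m 4"
  by (induction m) auto

lemma concat_rep_nil: "concat (replicate m ([]::nat list)) = []"
  by (induction m) auto

lemma R4_iff: "(v, w) \<in> R4 \<longleftrightarrow>
   (\<exists>m n. v = replicate m 0 @ replicate n 1 @ [2] \<and> w = [] @ concat (replicate m [4]) @ concat (replicate n [])) \<or>
   (\<exists>m n. v = replicate m 0 @ replicate n 1 @ [3] \<and> w = [] @ concat (replicate m []) @ concat (replicate n [4]))"
  unfolding R4_def concat_rep4 concat_rep_nil by auto

lemma top_lemma: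
  fixes T :: "('s::comm_ring_1, 'z) fst_scheme"
  assumes brA: "branch T wt SA ouA eA0 eA1 fA0 fA1 2 3 pp qq Ks"
    and brB: "branch T wt SB ouB eB0 eB1 fB0 fB1 3 2 pp qq Ks"
    and ouA: "ouA (Sym 0) = [4]" "ouA (Sym 1) = []"
    and ouB: "ouB (Sym 0) = []" "ouB (Sym 1) = [4]"
    and ini: "restrict_nonhalting T (fst_step T LEnd (init_conf T)) =
       (\<lambda>p x. tc (sc cA eA0) [] p x + tc (sc cB eB0) [] p x)"
    and iniacc: "\<And>x. (\<Sum>p\<in>acc T. wt (fst_step T LEnd (init_conf T) p x)) = 0"
    and NAB: "NA \<inter> NB = {}" and AAB: "AA \<inter> AB = {}"
    and clos: "\<And>a. a \<in> {Sym 0, Sym 1, Sym 2, Sym 3, REnd} \<Longrightarrow> closed_br T a NA AA \<and> closed_br T a NB AB"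
    and suA: "\<And>p. p \<notin> NA \<Longrightarrow> eA0 p = 0" and suB: "\<And>p. p \<notin> NB \<Longrightarrow> eB0 p = 0"
    and cK: "cA \<in> Ks" "cB \<in> Ks"
    and v: "v \<in> lists {0,1,2,3}"
  shows "((v, w) \<in> R4 \<longrightarrow> fst_run wt T (LEnd # map Sym v @ [REnd]) (init_conf T) w \<ge> min (wt cA) (wt cB) * wt qq)
     \<and> ((v, w) \<notin> R4 \<longrightarrow> fst_run wt T (LEnd # map Sym v @ [REnd]) (init_conf T) w \<le> (wt cA + wt cB) * wt qq * wt pp)"
proof -
  interpret A: branch T wt SA ouA eA0 eA1 fA0 fA1 2 3 pp qq Ks by (rule brA)
  interpret B: branch T wt SB ouB eB0 eB1 fB0 fB1 3 2 pp qq Ks by (rule brB)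
  have vA: "v \<in> lists {0, 1, 2, 3}" using v by simp
  have vB: "v \<in> lists {0, 1, 3, 2}" using v by (simp add: insert_commute)
  have P: "fst_run wt T (LEnd # map Sym v @ [REnd]) (init_conf T) w =
      Rv wt T cA eA0 [] v w + Rv wt T cB eB0 [] v w"
  proof -
    have "fst_run wt T (LEnd # map Sym v @ [REnd]) (init_conf T) w =
       fst_run wt T (map Sym v @ [REnd]) (\<lambda>p x. tc (sc cA eA0) [] p x + tc (sc cB eB0) [] p x) w"
      using iniacc ini by simp
    also have "\<dots> = fst_run wt T (map Sym v @ [REnd]) (tc (sc cA eA0) []) w +
        fst_run wt T (map Sym v @ [REnd]) (tc (sc cB eB0) []) w"
    proof (rule run_split[where wt=wt, OF A.wt0 NAB AAB])
      show "\<forall>a\<in>set (map Sym v @ [REnd]). closed_br T a NA AA \<and> closed_br T a NB AB"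
        using clos v by auto
      show "\<forall>p x. p \<notin> NA \<longrightarrow> tc (sc cA eA0) [] p x = 0" using suA unfolding tc_def sc_def by simp
      show "\<forall>p x. p \<notin> NB \<longrightarrow> tc (sc cB eB0) [] p x = 0" using suB unfolding tc_def sc_def by simp
    qed
    finally show ?thesis unfolding Rv_def .
  qed
  have nA: "0 \<le> Rv wt T cA eA0 [] v w" using A.runU[OF vA cK(1), of eA0] by simp
  have nB: "0 \<le> Rv wt T cB eB0 [] v w" using B.runU[OF vB cK(2), of eB0] by simp
  have wA: "0 \<le> wt cA" "0 \<le> wt cB" using A.Ks1 cK by auto
  have q: "0 \<le> wt qq" using A.qqb by simp
  show ?thesis
  proof (intro conjI impI)
    assume "(v, w) \<in> R4"
    then consider (a2) m n where "v = replicate m 0 @ replicate n 1 @ [2]"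
        "w = [] @ concat (replicate m (ouA (Sym 0))) @ concat (replicate n (ouA (Sym 1)))"
      | (a3) m n where "v = replicate m 0 @ replicate n 1 @ [3]"
        "w = [] @ concat (replicate m (ouB (Sym 0))) @ concat (replicate n (ouB (Sym 1)))"
      unfolding R4_iff ouA ouB by blast
    then show "fst_run wt T (LEnd # map Sym v @ [REnd]) (init_conf T) w \<ge> min (wt cA) (wt cB) * wt qq"
    proof cases
      case a2
      have "Rv wt T cA eA0 [] v w \<ge> wt cA * wt qq" unfolding a2(1) by (rule A.runE0[OF cK(1) a2(2)])
      moreover have "min (wt cA) (wt cB) * wt qq \<le> wt cA * wt qq" using q by (simp add: mult_right_mono)
      ultimately show ?thesis using P nB by linarith
    next
      case a3
      have "Rv wt T cB eB0 [] v w \<ge> wt cB * wt qq" unfolding a3(1) by (rule B.runE0[OF cK(2) a3(2)])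
      moreover have "min (wt cA) (wt cB) * wt qq \<le> wt cB * wt qq" using q by (simp add: mult_right_mono)
      ultimately show ?thesis using P nA by linarith
    qed
  next
    assume nR: "(v, w) \<notin> R4"
    have "Rv wt T cA eA0 [] v w \<le> wt cA * wt qq * wt pp"
      by (rule A.runM0[OF vA cK(1)]) (use nR in \<open>unfold R4_iff ouA, blast\<close>)
    moreover have "Rv wt T cB eB0 [] v w \<le> wt cB * wt qq * wt pp"
      by (rule B.runM0[OF vB cK(2)]) (use nR in \<open>unfold R4_iff ouB, blast\<close>)
    ultimately show "fst_run wt T (LEnd # map Sym v @ [REnd]) (init_conf T) w \<le> (wt cA + wt cB) * wt qq * wt pp"
      using P by (simp add: algebra_simps)
  qed
qed


definition dl :: "nat \<Rightarrow> nat \<Rightarrow> 's::{zero,one}" where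
  "dl q p = (if p = q then 1 else 0)"

lemma vstep_dl: "finite (states T) \<Longrightarrow> q \<in> states T \<Longrightarrow> vstep T a (dl q) p = trans T a q p"
proof -
  assume f: "finite (states T)" and q: "q \<in> states T"
  have "vstep T a (dl q) p = (\<Sum>q'\<in>states T. if q' = q then trans T a q' p else 0)"
    unfolding vstep_def by (rule sum.cong) (auto simp: dl_def)
  then show ?thesis using q f by (simp add: sum.delta)
qed

lemma vstep_fin: "finite F \<Longrightarrow> F \<subseteq> states T \<Longrightarrow> finite (states T) \<Longrightarrow> (\<And>q. q \<notin> F \<Longrightarrow> v q = 0) \<Longrightarrow>
   vstep T a v p = (\<Sum>q\<in>F. v q * trans T a q p)"
  unfolding vstep_def by (rule sum.mono_neutral_right) auto

definition outF :: "nat sym \<Rightarrow> nat \<Rightarrow> nat list" where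
  "outF a q = (if a = Sym 0 \<and> q \<in> {1,2,5,6} then [4] else if a = Sym 1 \<and> q \<in> {3,4,7,8} then [4] else [])"

definition ouA :: "nat sym \<Rightarrow> nat list" where "ouA a = (if a = Sym 0 then [4] else [])"
definition ouB :: "nat sym \<Rightarrow> nat list" where "ouB a = (if a = Sym 1 then [4] else [])"

definition pS :: "nat sym \<Rightarrow> nat \<Rightarrow> nat" where
  "pS a q = (if q \<notin> {0..8} then q else
     (case a of
       LEnd \<Rightarrow> q
     | REnd \<Rightarrow> (if q \<in> {5,6,7,8} then q + 4 else 13)
     | Sym b \<Rightarrow>
        (if b = 0 then (if q = 1 then 1 else if q = 3 then 3 else 13)
         else if b = 1 then (if q \<in> {1,2} then 2 else if q \<in> {3,4} then 4 else 13)
         else if b = 2 then (if q = 1 then 5 else if q = 2 then 6 else 13)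
         else if b = 3 then (if q = 3 then 7 else if q = 4 then 8 else 13)
         else 13)))"

definition pT :: "nat sym \<Rightarrow> nat \<Rightarrow> nat \<Rightarrow> real" where
  "pT a q p = (if a = LEnd \<and> q = 0 then (if p = 1 \<or> p = 3 then 1/2 else 0)
               else if p = pS a q then 1 else 0)"

definition pM :: "real fst" where
  "pM = \<lparr> states = {0..21}, init = 0, acc = {9..12}, rej = {13..21}, trans = pT, out = outF \<rparr>"

lemma pM_simps: "states pM = {0..21}" "init pM = 0" "acc pM = {9..12}" "rej pM = {13..21}"
  "trans pM = pT" "out pM = outF"
  unfolding pM_def by simp_all

lemma pM_nonhalting: "nonhalting pM = {0..8}"
  unfolding nonhalting_def pM_simps by auto

lemma pS_range: "pS a q \<in> {0..21}" if "q \<in> {0..21}"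
  using that unfolding pS_def by (auto split: sym.splits)

lemma tape_syms_4: "tape_syms {0,1,2,3} = {Sym 0, Sym 1, Sym 2, Sym 3, LEnd, REnd}"
  unfolding tape_syms_def by auto

lemma is_pfst_pM: "is_pfst {0,1,2,3} {4} pM"
proof -
  have basic: "fst_basic {0,1,2,3} {4} pM"
    unfolding fst_basic_def pM_simps
  proof (intro conjI ballI allI impI)
    fix a q p assume a: "a \<in> tape_syms {0,1,2,3}" and q: "q \<in> {0..21::nat}" and p: "p \<notin> {0..21::nat}"
    show "pT a q p = 0" using pS_range[OF q, of a] p unfolding pT_def by auto
  next
    fix a q assume "a \<in> tape_syms {0,1,2,3}" "q \<in> {0..21::nat}"
    show "set (outF a q) \<subseteq> {4}" unfolding outF_def by auto
  qed auto
  have rows: "(\<Sum>p\<in>{0..21}. pT a q p) = 1" if q: "q \<in> {0..21::nat}" for a q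
  proof (cases "a = LEnd \<and> q = 0")
    case True
    have "(\<Sum>p\<in>{0..21}. pT a q p) = (\<Sum>p\<in>{0..21::nat}. if p \<in> {1,3} then 1/2 else 0)"
      unfolding pT_def using True by (intro sum.cong) auto
    also have "\<dots> = (\<Sum>p\<in>{0..21::nat} \<inter> {1,3}. 1/2)" by (rule sum.inter_restrict[symmetric]) simp
    also have "{0..21::nat} \<inter> {1,3} = {1,3}" by auto
    also have "(\<Sum>p\<in>{1,3::nat}. (1/2::real)) = 1" by simp
    finally show ?thesis .
  next
    case False
    have "(\<Sum>p\<in>{0..21}. pT a q p) = (\<Sum>p\<in>{0..21::nat}. if p = pS a q then 1 else 0)"
      unfolding pT_def using False by (intro sum.cong) auto
    also have "\<dots> = 1" using pS_range[OF q, of a] by simp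
    finally show ?thesis .
  qed
  show ?thesis unfolding is_pfst_def
  proof (intro conjI ballI)
    show "fst_basic {0,1,2,3} {4} pM" by (rule basic)
  next
    fix a q p assume "a \<in> tape_syms {0,1,2,3}" "q \<in> states pM" "p \<in> states pM"
    show "0 \<le> trans pM a q p" unfolding pM_simps pT_def by auto
  next
    fix a q assume "a \<in> tape_syms {0,1,2,3}" "q \<in> states pM"
    then show "(\<Sum>p\<in>states pM. trans pM a q p) = 1"
      using rows unfolding pM_simps by auto
  next
    fix q p assume "q \<in> states pM" "p \<in> nonhalting pM"
    then show "trans pM REnd q p = 0" unfolding pM_nonhalting pM_simps pT_def pS_def by auto
  qed
qed


lemma pM_vstep: "q \<in> {0..21} \<Longrightarrow> vstep pM a (dl q) = (\<lambda>p. pT a q p)"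
  by (intro ext) (simp add: vstep_dl pM_simps)

lemma pM_rn: "rn pM v = (\<lambda>p. if p \<in> {0..8} then v p else 0)"
  unfolding rn_def pM_nonhalting by simp

lemma pM_accw: "accw (\<lambda>r. r) pM v = (\<Sum>p\<in>{9..12}. v p)"
  unfolding accw_def pM_simps by simp

lemmas pM_ss = pM_vstep pM_rn pM_accw pT_def pS_def dl_def sc_def fun_eq_iff

lemma brA_p: "branch pM (\<lambda>r. r) {1,2,5,6} ouA (dl 1) (dl 2) (dl 5) (dl 6) 2 3 0 1 {r. r \<ge> 0}"
  apply unfold_locales
  apply (simp_all add: pM_ss outF_def ouA_def pM_simps)
  apply (auto split: sym.splits)
  done


lemma brB_p: "branch pM (\<lambda>r. r) {3,4,7,8} ouB (dl 3) (dl 4) (dl 7) (dl 8) 3 2 0 1 {r. r \<ge> 0}"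
  apply unfold_locales
  apply (simp_all add: pM_ss outF_def ouB_def pM_simps)
  apply (auto split: sym.splits)
  done

lemma init_tc: "init_conf T = tc (dl (init T)) []"
  unfolding init_conf_def tc_def dl_def by (intro ext) auto

lemma pM_ini: "restrict_nonhalting pM (fst_step pM LEnd (init_conf pM)) =
   (\<lambda>p x. tc (sc (1/2) (dl 1)) [] p x + tc (sc (1/2) (dl 3)) [] p x)"
proof -
  have e: "fst_step pM LEnd (init_conf pM) = tc (vstep pM LEnd (dl 0)) ([] @ [])"
    unfolding init_tc pM_simps by (rule step_tc) (simp add: pM_simps outF_def)
  show ?thesis unfolding e restrict_tc
    by (simp add: pM_ss tc_def pM_simps)
qed

lemma pM_iniacc: "(\<Sum>p\<in>acc pM. fst_step pM LEnd (init_conf pM) p x) = 0"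
proof -
  have e: "fst_step pM LEnd (init_conf pM) = tc (vstep pM LEnd (dl 0)) ([] @ [])"
    unfolding init_tc pM_simps by (rule step_tc) (simp add: pM_simps outF_def)
  show ?thesis unfolding e by (intro sum.neutral) (auto simp: pM_ss tc_def pM_simps)
qed

lemma pM_closed: "a \<in> {Sym 0, Sym 1, Sym 2, Sym 3, REnd} \<Longrightarrow> closed_br pM a {1,2,5,6} {9,10} \<and> closed_br pM a {3,4,7,8} {11,12}"
  unfolding closed_br_def pM_nonhalting pM_simps pT_def pS_def
  by (auto split: if_splits)

lemma pfst_exists: "\<exists>T. is_pfst {0,1,2,3} {4} T \<and> computes_isolated {0,1,2,3} {4} (pfst_prob T) R4"
proof (intro exI conjI)
  show "is_pfst {0,1,2,3} {4} pM" by (rule is_pfst_pM)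
  show "computes_isolated {0,1,2,3} {4} (pfst_prob pM) R4"
    unfolding computes_isolated_def
  proof (intro exI conjI ballI)
    fix v w assume v: "v \<in> lists {0,1,2,3::nat}" and w: "w \<in> lists {4::nat}"
    have t: "((v, w) \<in> R4 \<longrightarrow> fst_run (\<lambda>r. r) pM (LEnd # map Sym v @ [REnd]) (init_conf pM) w \<ge> min (1/2) (1/2) * 1)
     \<and> ((v, w) \<notin> R4 \<longrightarrow> fst_run (\<lambda>r. r) pM (LEnd # map Sym v @ [REnd]) (init_conf pM) w \<le> (1/2 + 1/2) * 1 * 0)"
      by (rule top_lemma[OF brA_p brB_p _ _ _ _ pM_ini pM_iniacc _ _ pM_closed])
         (use v in \<open>auto simp: ouA_def ouB_def dl_def\<close>)
    show "(v, w) \<in> R4 \<longrightarrow> 1/4 + 1/4 \<le> pfst_prob pM w v" using t unfolding pfst_prob_def by auto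
    show "(v, w) \<notin> R4 \<longrightarrow> pfst_prob pM w v \<le> 1/4 - 1/4" using t unfolding pfst_prob_def by auto
  qed auto
qed


lemma bp_unitary:
  fixes bm :: "nat \<Rightarrow> nat \<Rightarrow> complex"
  assumes len: "length l = n" and dist: "distinct l" and rng: "set l \<subseteq> {0..<n}"
    and Bsub: "B \<subseteq> {0..<n}" and outB: "\<forall>q\<in>{0..<n} - B. l ! q \<notin> B"
    and U: "\<forall>q\<in>B. \<forall>q'\<in>B. (\<Sum>p\<in>B. bm q p * cnj (bm q' p)) = (if q = q' then 1 else 0)"
    and V: "V = (\<lambda>q p. if q \<in> B then (if p \<in> B then bm q p else 0) else if q < n \<and> p = l ! q then 1 else 0)"
  shows "\<forall>q\<in>{0..<n}. \<forall>q'\<in>{0..<n}. (\<Sum>p\<in>{0..<n}. V q p * cnj (V q' p)) = (if q = q' then 1 else 0)"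
proof (intro ballI)
  fix q q' assume q: "q \<in> {0..<n}" and q': "q' \<in> {0..<n}"
  have lq: "l ! q \<in> {0..<n}" if "q \<in> {0..<n}" for q using that rng len by (auto simp: set_conv_nth)
  show "(\<Sum>p\<in>{0..<n}. V q p * cnj (V q' p)) = (if q = q' then 1 else 0)"
  proof (cases "q \<in> B")
    case qB: True
    show ?thesis
    proof (cases "q' \<in> B")
      case True
      have "(\<Sum>p\<in>{0..<n}. V q p * cnj (V q' p)) = (\<Sum>p\<in>B. V q p * cnj (V q' p))"
        by (rule sum.mono_neutral_right) (use Bsub qB in \<open>auto simp: V\<close>)
      also have "\<dots> = (\<Sum>p\<in>B. bm q p * cnj (bm q' p))" by (rule sum.cong) (use qB True in \<open>auto simp: V\<close>)
      finally show ?thesis using U qB True by simp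
    next
      case False
      have "(\<Sum>p\<in>{0..<n}. V q p * cnj (V q' p)) = 0"
        by (rule sum.neutral) (use qB False outB q' in \<open>auto simp: V\<close>)
      then show ?thesis using qB False by auto
    qed
  next
    case qB: False
    show ?thesis
    proof (cases "q' \<in> B")
      case True
      have "(\<Sum>p\<in>{0..<n}. V q p * cnj (V q' p)) = 0"
        by (rule sum.neutral) (use qB True outB q in \<open>auto simp: V\<close>)
      then show ?thesis using qB True by auto
    next
      case False
      have "(\<Sum>p\<in>{0..<n}. V q p * cnj (V q' p)) = (\<Sum>p\<in>{0..<n}. if p = l ! q then (if l ! q = l ! q' then 1 else 0) else 0)"
        by (rule sum.cong) (use qB False q q' in \<open>auto simp: V\<close>)
      also have "\<dots> = (if l ! q = l ! q' then 1 else 0)" using lq[OF q] by (simp add: sum.delta)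
      also have "\<dots> = (if q = q' then 1 else 0)" using nth_eq_iff_index_eq[OF dist] q q' len by auto
      finally show ?thesis .
    qed
  qed
qed


definition wv :: "nat \<Rightarrow> complex" where
  "wv j = (if j = 1 then 36/65 else if j = 2 then 15/65 else if j = 3 then 48/65 else if j = 4 then 20/65 else 0)"

definition Hm :: "nat \<Rightarrow> nat \<Rightarrow> complex" where
  "Hm q p = (if q = 0 then wv p else if p = 0 then wv q else (if q = p then 1 else 0) - wv q * wv p)"

definition m3 :: "nat \<Rightarrow> nat \<Rightarrow> complex" where
  "m3 i j = (if i = 0 then (if j = 0 then 144/169 else if j = 1 then 60/169 else -5/13)
        else if i = 1 then (if j = 0 then 60/169 else if j = 1 then 25/169 else 12/13)
        else (if j = 0 then -5/13 else if j = 1 then 12/13 else 0))"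

definition ix :: "nat \<Rightarrow> nat" where
  "ix q = (if q = 1 \<or> q = 3 then 0 else if q = 2 \<or> q = 4 then 1 else 2)"

definition M0 :: "nat \<Rightarrow> nat \<Rightarrow> complex" where
  "M0 q p = (if (q \<in> {1,2,13} \<and> p \<in> {1,2,13}) \<or> (q \<in> {3,4,14} \<and> p \<in> {3,4,14}) then m3 (ix q) (ix p) else 0)"

definition blk :: "nat sym \<Rightarrow> nat set" where
  "blk a = (if a = LEnd then {0,1,2,3,4} else if a = Sym 0 then {1,2,3,4,13,14} else {})"

definition bm :: "nat sym \<Rightarrow> nat \<Rightarrow> nat \<Rightarrow> complex" where
  "bm a = (if a = LEnd then Hm else M0)"

definition pl :: "nat sym \<Rightarrow> nat list" where
  "pl a = (if a = Sym 0 then [0,1,2,3,4,15,16,17,18,9,10,11,12,13,14,5,6,7,8,19,20,21]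
     else if a = Sym 1 then [0,13,2,14,4,15,16,17,18,9,10,11,12,1,3,5,6,7,8,19,20,21]
     else if a = Sym 2 then [0,5,6,13,14,15,16,17,18,9,10,11,12,3,4,1,2,7,8,19,20,21]
     else if a = Sym 3 then [0,13,14,7,8,15,16,17,18,9,10,11,12,1,2,5,6,3,4,19,20,21]
     else if a = REnd then [19,13,14,15,16,9,10,11,12,5,6,7,8,1,2,3,4,17,18,0,20,21]
     else [0..<22])"

definition qT :: "nat sym \<Rightarrow> nat \<Rightarrow> nat \<Rightarrow> complex" where
  "qT a q p = (if q \<in> blk a then (if p \<in> blk a then bm a q p else 0)
      else if q < 22 \<and> p = pl a ! q then 1 else 0)"

definition qM :: "complex fst" where
  "qM = \<lparr> states = {0..<22}, init = 0, acc = {9..12}, rej = {13..<22}, trans = qT, out = outF \<rparr>"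

lemma qM_simps: "states qM = {0..<22}" "init qM = 0" "acc qM = {9..12}" "rej qM = {13..<22}"
  "trans qM = qT" "out qM = outF"
  unfolding qM_def by simp_all

lemma qM_nonhalting: "nonhalting qM = {0..8}"
  unfolding nonhalting_def qM_simps by auto

lemma pl_props: "length (pl a) = 22" "distinct (pl a)" "set (pl a) \<subseteq> {0..<22}"
  unfolding pl_def by auto

lemma Hm_unitary: "\<forall>q\<in>{0,1,2,3,4}. \<forall>q'\<in>{0,1,2,3,4::nat}. (\<Sum>p\<in>{0,1,2,3,4}. Hm q p * cnj (Hm q' p)) = (if q = q' then 1 else 0)"
  unfolding Hm_def wv_def by simp

lemma M0_unitary: "\<forall>q\<in>{1,2,3,4,13,14}. \<forall>q'\<in>{1,2,3,4,13,14::nat}. (\<Sum>p\<in>{1,2,3,4,13,14}. M0 q p * cnj (M0 q' p)) = (if q = q' then 1 else 0)"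
  unfolding M0_def m3_def ix_def by simp


lemma e22: "{0..<22::nat} = {0,1,2,3,4,5,6,7,8,9,10,11,12,13,14,15,16,17,18,19,20,21}"
  by (simp add: atLeast0LessThan lessThan_nat_numeral lessThan_Suc insert_commute)
lemma e8: "{0..8::nat} = {0,1,2,3,4,5,6,7,8}"
  by (simp add: atLeast0AtMost atMost_nat_numeral atMost_Suc insert_commute)

lemma blk_sub: "blk a \<subseteq> {0..<22}" unfolding blk_def by auto

lemma blk_out: "a \<in> tape_syms {0,1,2,3} \<Longrightarrow> \<forall>q\<in>{0..<22} - blk a. pl a ! q \<notin> blk a"
  unfolding tape_syms_4 e22 by (auto simp: blk_def pl_def)

lemma qT_range: "q \<in> {0..<22} \<Longrightarrow> p \<notin> {0..<22} \<Longrightarrow> qT a q p = 0"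
  unfolding qT_def using blk_sub[of a] pl_props[of a] by (auto simp: set_conv_nth)

lemma bm_unitary: "a \<in> tape_syms {0,1,2,3} \<Longrightarrow>
  \<forall>q\<in>blk a. \<forall>q'\<in>blk a. (\<Sum>p\<in>blk a. bm a q p * cnj (bm a q' p)) = (if q = q' then 1 else 0)"
  unfolding tape_syms_4 using Hm_unitary M0_unitary by (auto simp: blk_def bm_def)

lemma is_qfst_qM: "is_qfst {0,1,2,3} {4} qM"
  unfolding is_qfst_def
proof (intro conjI)
  show "fst_basic {0,1,2,3} {4} qM"
    unfolding fst_basic_def qM_simps by (auto simp: qT_range outF_def)
  show "\<forall>a\<in>tape_syms {0,1,2,3}. \<forall>q\<in>states qM. \<forall>q'\<in>states qM.
      (\<Sum>p\<in>states qM. trans qM a q p * cnj (trans qM a q' p)) = (if q = q' then 1 else 0)"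
  proof (intro ballI)
    fix a q q' assume a: "a \<in> tape_syms {0,1,2,3}" and q: "q \<in> states qM" and q': "q' \<in> states qM"
    have "\<forall>q\<in>{0..<22}. \<forall>q'\<in>{0..<22}. (\<Sum>p\<in>{0..<22}. qT a q p * cnj (qT a q' p)) = (if q = q' then 1 else 0)"
      by (rule bp_unitary[OF pl_props blk_sub blk_out[OF a] bm_unitary[OF a]]) (simp add: qT_def fun_eq_iff)
    then show "(\<Sum>p\<in>states qM. trans qM a q p * cnj (trans qM a q' p)) = (if q = q' then 1 else 0)"
      using q q' unfolding qM_simps by blast
  qed
  show "\<forall>q\<in>nonhalting qM. \<forall>p\<in>nonhalting qM. trans qM REnd q p = 0"
    unfolding qM_nonhalting qM_simps e8 by (auto simp: qT_def blk_def pl_def)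
qed


definition v2 :: "nat \<Rightarrow> nat \<Rightarrow> nat \<Rightarrow> complex" where
  "v2 i j p = (if p = i then 12/13 else if p = j then 5/13 else 0)"

lemma e9_12: "{9..12::nat} = {9,10,11,12}"
  by (simp add: atLeastAtMost_def atLeast_def atMost_def) (auto)

lemma qvs1: "i < 22 \<Longrightarrow> vstep qM a (dl i) = (\<lambda>p. qT a i p)"
  by (intro ext) (simp add: vstep_dl qM_simps)

lemma qvs2: "i < 22 \<Longrightarrow> j < 22 \<Longrightarrow> i \<noteq> j \<Longrightarrow> vstep qM a (v2 i j) = (\<lambda>p. 12/13 * qT a i p + 5/13 * qT a j p)"
proof (intro ext)
  fix p assume ij: "i < 22" "j < 22" "i \<noteq> j"
  have "vstep qM a (v2 i j) p = (\<Sum>q\<in>{i, j}. v2 i j q * trans qM a q p)"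
    by (rule vstep_fin) (use ij in \<open>auto simp: qM_simps v2_def\<close>)
  then show "vstep qM a (v2 i j) p = 12/13 * qT a i p + 5/13 * qT a j p"
    using ij by (simp add: v2_def qM_simps)
qed

lemma qM_rn: "rn qM v = (\<lambda>p. if p \<in> {0..8} then v p else 0)"
  unfolding rn_def qM_nonhalting by simp

lemma qM_accw: "accw (\<lambda>c. (cmod c)\<^sup>2) qM v = (cmod (v 9))\<^sup>2 + (cmod (v 10))\<^sup>2 + (cmod (v 11))\<^sup>2 + (cmod (v 12))\<^sup>2"
  unfolding accw_def qM_simps e9_12 by simp

lemmas qM_ss = qvs1 qvs2 qM_rn qM_accw qT_def blk_def bm_def M0_def m3_def ix_def pl_def dl_def v2_def sc_def fun_eq_iff e8

lemma brA_q: "branch qM (\<lambda>c. (cmod c)\<^sup>2) {1,2,5,6} ouA (v2 1 2) (dl 2) (v2 5 6) (dl 6) 2 3 (5/13) (5/13) UNIV"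
  apply unfold_locales
  apply (simp_all add: qM_ss outF_def ouA_def qM_simps norm_mult power_mult_distrib power_divide)
  apply (auto simp: power_divide)
  done


lemma brB_q: "branch qM (\<lambda>c. (cmod c)\<^sup>2) {3,4,7,8} ouB (v2 3 4) (dl 4) (v2 7 8) (dl 8) 3 2 (5/13) (5/13) UNIV"
  apply unfold_locales
  apply (simp_all add: qM_ss outF_def ouB_def qM_simps norm_mult power_mult_distrib power_divide)
  apply (auto simp: power_divide)
  done

lemma qM_step_init: "fst_step qM LEnd (init_conf qM) = tc (vstep qM LEnd (dl 0)) ([] @ [])"
  unfolding init_tc qM_simps by (rule step_tc) (simp add: qM_simps outF_def)

lemma qM_ini: "restrict_nonhalting qM (fst_step qM LEnd (init_conf qM)) =
   (\<lambda>p x. tc (sc (3/5) (v2 1 2)) [] p x + tc (sc (4/5) (v2 3 4)) [] p x)"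
  unfolding qM_step_init restrict_tc
  by (simp add: qM_ss tc_def qM_simps Hm_def wv_def)

lemma qM_iniacc: "(\<Sum>p\<in>acc qM. (cmod (fst_step qM LEnd (init_conf qM) p x))\<^sup>2) = 0"
  unfolding qM_step_init by (intro sum.neutral) (auto simp: qM_ss tc_def qM_simps Hm_def wv_def)

lemma qM_closed: "a \<in> {Sym 0, Sym 1, Sym 2, Sym 3, REnd} \<Longrightarrow> closed_br qM a {1,2,5,6} {9,10} \<and> closed_br qM a {3,4,7,8} {11,12}"
  unfolding closed_br_def qM_nonhalting qM_simps qT_def blk_def pl_def bm_def M0_def
  by (auto split: if_splits)

lemma qfst_exists: "\<exists>T. is_qfst {0,1,2,3} {4} T \<and> computes_isolated {0,1,2,3} {4} (qfst_prob T) R4"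
proof (intro exI conjI)
  show "is_qfst {0,1,2,3} {4} qM" by (rule is_qfst_qM)
  show "computes_isolated {0,1,2,3} {4} (qfst_prob qM) R4"
    unfolding computes_isolated_def
  proof (intro exI conjI ballI)
    fix v w assume v: "v \<in> lists {0,1,2,3::nat}" and w: "w \<in> lists {4::nat}"
    let ?P = "fst_run (\<lambda>c. (cmod c)\<^sup>2) qM (LEnd # map Sym v @ [REnd]) (init_conf qM) w"
    have t: "((v, w) \<in> R4 \<longrightarrow> ?P \<ge> min ((cmod (3/5::complex))\<^sup>2) ((cmod (4/5::complex))\<^sup>2) * (cmod (5/13::complex))\<^sup>2)
     \<and> ((v, w) \<notin> R4 \<longrightarrow> ?P \<le> ((cmod (3/5::complex))\<^sup>2 + (cmod (4/5::complex))\<^sup>2) * (cmod (5/13::complex))\<^sup>2 * (cmod (5/13::complex))\<^sup>2)"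
      by (rule top_lemma[OF brA_q brB_q _ _ _ _ qM_ini qM_iniacc _ _ qM_closed])
         (use v in \<open>auto simp: ouA_def ouB_def v2_def\<close>)
    have c: "(cmod (3/5::complex))\<^sup>2 = 9/25" "(cmod (4/5::complex))\<^sup>2 = 16/25" "(cmod (5/13::complex))\<^sup>2 = 25/169"
      by (simp_all add: norm_divide power_divide)
    show "(v, w) \<in> R4 \<longrightarrow> 6/169 + 2/169 \<le> qfst_prob qM w v" using t unfolding c qfst_prob_def by auto
    show "(v, w) \<notin> R4 \<longrightarrow> qfst_prob qM w v \<le> 6/169 - 2/169" using t unfolding c qfst_prob_def by auto
  qed auto
qed


theorem theorem9:
  shows "(\<exists>T. is_pfst {0,1,2,3} {4} T \<and> computes_isolated {0,1,2,3} {4} (pfst_prob T) R4) \<and>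
         (\<exists>T. is_qfst {0,1,2,3} {4} T \<and> computes_isolated {0,1,2,3} {4} (qfst_prob T) R4) \<and>
         (\<forall>T \<alpha>. is_pfst {0,1,2,3} {4} T \<longrightarrow> \<alpha> > 1/2 \<longrightarrow>
              \<not> computes_with_prob {0,1,2,3} {4} (pfst_prob T) \<alpha> R4) \<and>
         (\<forall>T \<alpha>. is_qfst {0,1,2,3} {4} T \<longrightarrow> \<alpha> > 1/2 \<longrightarrow>
              \<not> computes_with_prob {0,1,2,3} {4} (qfst_prob T) \<alpha> R4)"
  using pfst_exists qfst_exists pfst_impossible qfst_impossible by blast

end
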